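(* Assume the bounded-cost assumption and $J\ge2$. Suppose that for every $t\in[T]$ there is $\hat Z_t\in\mathcal Z$ with $\hat Z^j_t=\hat Z_t$ for all $j\in[J]$, and let $\underline L_T=\sum_{t=1}^T\mathbf 1\{\hat Z_t\ne Z_t\}$. If all agents use POMWU with learning rate $\eta^\star=\Theta\big(J^{-1/2}T^{-1/4}[\ln K(\underline L_T+m)]^{1/4}\big)$, then for every $j\in[J]$, $$\mathrm{Reg}^j_T=O\big([\ln K(\underline L_T+m)]^{3/4}T^{1/4}J^{1/2}\big).$$
   Context: Setting. There are $J$ agents indexed by $j\in[J]$. Agent $j$ has a finite action set $\mathcal A^j=\{a^j_1,\dots,a^j_K\}$ with $K$ elements; $\mathcal A=\prod_i\mathcal A^i$, $\mathcal A^{-j}=\prod_{i\ne j}\mathcal A^i$. $\Delta_K$ is the probability simplex in $\mathbb R^K$, $w\in\Delta_K$ identified with a distribution on $\mathcal A^j$. The context set $\mathcal Z=\{z_1,\dots,z_m\}\subset\mathbb R^d$ is finite with $m$ elements. Agent $j$ has $\phi^j:\mathcal A\to\mathbb R^d$ and cost $c^j(\mathbf w,Z)=\mathbb E_{\mathbf a\sim\mathbf w}[\langle\phi^j(\mathbf a),Z\rangle]$; $c^j(w,\mathbf w^{-j},Z)=c^j(w\otimes\mathbf w^{-j},Z)$. $\Phi^j(\mathbf w^{-j})\in\mathbb R^{d\times K}$ has entries $\Phi^j(\mathbf w^{-j})_{\ell,k}=\mathbb E_{\mathbf a^{-j}\sim\mathbf w^{-j}}[\phi^j(a^j_k,\mathbf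 a^{-j})[\ell]]$. Bounded-cost assumption: $|\langle Z,\phi^j(\mathbf a)\rangle|\le1$ for all $j,\mathbf a,Z$. Game protocol: $T$ rounds, fixed sequence $Z_1,\dots,Z_T\in\mathcal Z$; at round $t$ each agent $j$ receives a prediction $\hat Z^j_t\in\mathcal Z$, plays $w^j_t\in\Delta_K$, incurs $c^j(w^j_t,\mathbf w^{-j}_t,Z_t)$ with $\mathbf w^{-j}_t=\bigotimes_{i\ne j}w^i_t$, and observes $Z_t$ and $\Phi^j(\mathbf w^{-j}_t)$. Contextual external regret: $\mathrm{Reg}^j_T=\sum_{t=1}^Tc^j(w^j_t,\mathbf w^{-j}_t,Z_t)-\min_{\pi:\mathcal Z\to\Delta_K}\sum_{t=1}^Tc^j(\pi(Z_t),\mathbf w^{-j}_t,Z_t)$. POMWU with learning rate $\eta>0$ (for agent $j$): maintain for each $z\in\mathcal Z$ a vector $\rho_z\in\mathbb R^K_{>0}$, initialized to $(1/K,\dots,1/K)$, and a matrix $\Psi_z\in\mathbb R^{d\times K}$, initialized to $0$. At round $t$, with $\hat Z=\hat Z^j_t$, play $w^j_t[\ell]=\rho_{\hat Z}[\ell]\exp(-\eta(\Psi_{\hat Z}^\top\hat Z)[\ell])/\sum_{k=1}^K\rho_{\hat Z}[k]\exp(-\eta(\Psi_{\hat Z}^\top\hat Z)[k])$. After observing $Z_t$ and $\Phi_t=\Phi^j(\mathbf w^{-j}_t)$, set $\Psi_{Z_t}\leftarrow\Phi_t$ and $\rho_{Z_t}[\ell]\leftarrow\rho_{Z_t}[\ell]\exp(-\eta(\Phi_t^\top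 Z_t)[\ell])$ for all $\ell$. $O,\Theta$ hide absolute constants. *)

theory Defs
  imports Complex_Main "HOL-Library.FuncSet"
begin

text \<open>Agents are j < J, actions of each agent are k < K (action a^j_{k+1}
  is encoded as k). Vectors in R^d are functions nat => real, only coordinates < d matter.
  Rounds are t < T (round t+1 of the paper). A mixed strategy profile is
  ws :: nat => nat => real, ws i k = probability that agent i plays action k.\<close>

definition ip :: "nat \<Rightarrow> (nat \<Rightarrow> real) \<Rightarrow> (nat \<Rightarrow> real) \<Rightarrow> real" where
  "ip d x y = (\<Sum>l<d. x l * y l)"

definition simplex :: "nat \<Rightarrow> (nat \<Rightarrow> real) set" where
  "simplex K = {w. (\<forall>k<K. 0 \<le> w k) \<and> (\<Sum>k<K. w k) = 1}"

definition joint_actions :: "nat \<Rightarrow> nat \<Rightarrow> (nat \<Rightarrow> nat) set" where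
  "joint_actions J K = PiE {..<J} (\<lambda>_. {..<K})"

definition exp_cost :: "nat \<Rightarrow> nat \<Rightarrow> nat \<Rightarrow> (nat \<Rightarrow> (nat \<Rightarrow> nat) \<Rightarrow> nat \<Rightarrow> real)
    \<Rightarrow> nat \<Rightarrow> (nat \<Rightarrow> nat \<Rightarrow> real) \<Rightarrow> (nat \<Rightarrow> real) \<Rightarrow> real" where
  "exp_cost J K d \<phi> j ws Z =
     (\<Sum>a\<in>joint_actions J K. (\<Prod>i<J. ws i (a i)) * ip d (\<phi> j a) Z)"

text \<open>Column k of Phi^j(w^{-j}): E_{a^{-j}}[phi^j(a^j_k, a^{-j})] (a vector in R^d).\<close>
definition Phi :: "nat \<Rightarrow> nat \<Rightarrow> (nat \<Rightarrow> (nat \<Rightarrow> nat) \<Rightarrow> nat \<Rightarrow> real)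
    \<Rightarrow> nat \<Rightarrow> (nat \<Rightarrow> nat \<Rightarrow> real) \<Rightarrow> nat \<Rightarrow> nat \<Rightarrow> real" where
  "Phi J K \<phi> j ws k = (\<lambda>l. \<Sum>a\<in>PiE ({..<J} - {j}) (\<lambda>_. {..<K}).
       (\<Prod>i\<in>{..<J} - {j}. ws i (a i)) * \<phi> j (a(j := k)) l)"

definition pomwu_play :: "nat \<Rightarrow> nat \<Rightarrow> real \<Rightarrow> ((nat \<Rightarrow> real) \<Rightarrow> nat \<Rightarrow> real)
    \<Rightarrow> ((nat \<Rightarrow> real) \<Rightarrow> nat \<Rightarrow> nat \<Rightarrow> real) \<Rightarrow> (nat \<Rightarrow> real) \<Rightarrow> nat \<Rightarrow> real" where
  "pomwu_play K d \<eta> \<rho> \<Psi> zh = (\<lambda>l. if l < K then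
      \<rho> zh l * exp (- \<eta> * ip d (\<Psi> zh l) zh) /
        (\<Sum>k<K. \<rho> zh k * exp (- \<eta> * ip d (\<Psi> zh k) zh))
     else 0)"

text \<open>Joint state of all agents running POMWU with learning rate eta at the start of round t:
  for each agent j, rho j z and Psi j z (Psi j z k is column k of the d x K matrix).
  Zh j t is the prediction of agent j at round t, Zs t the realized context.\<close>
fun game_state :: "nat \<Rightarrow> nat \<Rightarrow> nat \<Rightarrow> (nat \<Rightarrow> (nat \<Rightarrow> nat) \<Rightarrow> nat \<Rightarrow> real) \<Rightarrow> real
    \<Rightarrow> (nat \<Rightarrow> nat \<Rightarrow> nat \<Rightarrow> real) \<Rightarrow> (nat \<Rightarrow> nat \<Rightarrow> real) \<Rightarrow> nat
    \<Rightarrow> (nat \<Rightarrow> (nat \<Rightarrow> real) \<Rightarrow> nat \<Rightarrow> real) \<times> (nat \<Rightarrow> (nat \<Rightarrow> real) \<Rightarrow> nat \<Rightarrow> nat \<Rightarrow> real)" where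
  "game_state J K d \<phi> \<eta> Zh Zs 0 = ((\<lambda>j z l. 1 / real K), (\<lambda>j z k l. 0))"
| "game_state J K d \<phi> \<eta> Zh Zs (Suc t) =
     (case game_state J K d \<phi> \<eta> Zh Zs t of (\<rho>, \<Psi>) \<Rightarrow>
       (let ws = (\<lambda>j. pomwu_play K d \<eta> (\<rho> j) (\<Psi> j) (Zh j t))
        in ((\<lambda>j z l. if z = Zs t then \<rho> j z l * exp (- \<eta> * ip d (Phi J K \<phi> j ws l) z)
                     else \<rho> j z l),
            (\<lambda>j z. if z = Zs t then Phi J K \<phi> j ws else \<Psi> j z))))"

definition game_play :: "nat \<Rightarrow> nat \<Rightarrow> nat \<Rightarrow> (nat \<Rightarrow> (nat \<Rightarrow> nat) \<Rightarrow> nat \<Rightarrow> real) \<Rightarrow> real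
    \<Rightarrow> (nat \<Rightarrow> nat \<Rightarrow> nat \<Rightarrow> real) \<Rightarrow> (nat \<Rightarrow> nat \<Rightarrow> real) \<Rightarrow> nat \<Rightarrow> nat \<Rightarrow> nat \<Rightarrow> real" where
  "game_play J K d \<phi> \<eta> Zh Zs t =
     (case game_state J K d \<phi> \<eta> Zh Zs t of (\<rho>, \<Psi>) \<Rightarrow>
        (\<lambda>j. pomwu_play K d \<eta> (\<rho> j) (\<Psi> j) (Zh j t)))"

definition ctx_regret :: "nat \<Rightarrow> nat \<Rightarrow> nat \<Rightarrow> (nat \<Rightarrow> (nat \<Rightarrow> nat) \<Rightarrow> nat \<Rightarrow> real)
    \<Rightarrow> (nat \<Rightarrow> real) set \<Rightarrow> (nat \<Rightarrow> nat \<Rightarrow> real) \<Rightarrow> nat \<Rightarrow> (nat \<Rightarrow> nat \<Rightarrow> nat \<Rightarrow> real)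
    \<Rightarrow> nat \<Rightarrow> real" where
  "ctx_regret J K d \<phi> Ctx Zs T ws j =
     (\<Sum>t<T. exp_cost J K d \<phi> j (ws t) (Zs t))
     - Inf {(\<Sum>t<T. exp_cost J K d \<phi> j ((ws t)(j := \<pi> (Zs t))) (Zs t)) | \<pi>.
              \<forall>z\<in>Ctx. \<pi> z \<in> simplex K}"

end

theory Submission
  imports Defs
begin


lemma exp_quad:
  fixes y :: real assumes "\<bar>y\<bar> \<le> 1" shows "exp y \<le> 1 + y + y\<^sup>2"
proof (cases "y \<ge> 0")
  case True thus ?thesis using exp_bound[of y] assms by auto
next
  case False
  define u where "u = - y"
  have u: "0 \<le> u" "u \<le> 1" using False assms u_def by auto
  have "1 + u \<le> exp u" by (rule exp_ge_add_one_self)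
  have "exp y = 1 / exp u" by (simp add: u_def exp_minus field_simps)
  also have "\<dots> \<le> 1 / (1 + u)" using \<open>1 + u \<le> exp u\<close> u by (intro divide_left_mono) auto
  also have "\<dots> \<le> 1 - u + u\<^sup>2"
  proof -
    have "1 \<le> (1 - u + u\<^sup>2) * (1 + u)" using u by (simp add: algebra_simps power2_eq_square power3_eq_cube)
    thus ?thesis using u by (simp add: field_simps)
  qed
  finally show ?thesis by (simp add: u_def)
qed

lemma opt_step:
  fixes \<rho> m lv :: "nat \<Rightarrow> real"
  assumes K: "K \<ge> 1" and pos: "\<forall>k<K. \<rho> k > 0"
    and dlt: "\<forall>k<K. \<bar>lv k - m k\<bar> \<le> \<delta>" and eta: "0 \<le> \<eta>" "\<eta> * \<delta> \<le> 1"
  shows "ln (\<Sum>k<K. \<rho> k * exp (- \<eta> * lv k)) \<le> ln (\<Sum>k<K. \<rho> k)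
     - \<eta> * (\<Sum>k<K. (\<rho> k * exp (- \<eta> * m k) / (\<Sum>k<K. \<rho> k * exp (- \<eta> * m k))) * lv k)
     + \<eta>\<^sup>2 * \<delta>\<^sup>2"
proof -
  define S where "S = (\<Sum>k<K. \<rho> k)"
  define Q where "Q = (\<Sum>k<K. \<rho> k * exp (- \<eta> * m k))"
  define v where "v k = \<rho> k * exp (- \<eta> * m k) / Q" for k
  have ne: "{..<K} \<noteq> {}" using K by (auto simp: lessThan_empty_iff)
  have S0: "S > 0" unfolding S_def using pos ne by (intro sum_pos) auto
  have Q0: "Q > 0" unfolding Q_def using pos ne by (intro sum_pos) auto
  have v0: "\<forall>k<K. v k > 0" using pos Q0 by (auto simp: v_def)
  have sv: "(\<Sum>k<K. v k) = 1" using Q0 by (simp add: v_def Q_def sum_divide_distrib[symmetric])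
  have d0: "\<delta> \<ge> 0" using dlt K by (meson abs_ge_zero le_less_trans less_le_not_le not_less zero_less_one le_trans)
  have "\<forall>k<K. \<rho> k * exp (- \<eta> * lv k) = Q * v k * exp (- \<eta> * (lv k - m k))"
    using Q0 by (auto simp: v_def algebra_simps simp flip: exp_add)
  hence e1: "(\<Sum>k<K. \<rho> k * exp (- \<eta> * lv k)) = Q * (\<Sum>k<K. v k * exp (- \<eta> * (lv k - m k)))"
    by (simp add: sum_distrib_left mult.assoc)
  have "\<forall>k<K. v k * exp (- \<eta> * (lv k - m k)) \<le> v k * (1 - \<eta> * (lv k - m k) + \<eta>\<^sup>2 * \<delta>\<^sup>2)"
  proof (intro allI impI)
    fix k assume k: "k < K"
    have a: "\<bar>lv k - m k\<bar> \<le> \<delta>" using dlt k by auto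
    have "\<bar>- \<eta> * (lv k - m k)\<bar> \<le> \<eta> * \<delta>" using a eta by (simp add: abs_mult mult_left_mono)
    hence b: "\<bar>- \<eta> * (lv k - m k)\<bar> \<le> 1" using eta by linarith
    have c: "(\<eta> * (lv k - m k))\<^sup>2 \<le> \<eta>\<^sup>2 * \<delta>\<^sup>2"
    proof -
      have "(\<eta> * (lv k - m k))\<^sup>2 = (\<bar>\<eta> * (lv k - m k)\<bar>)\<^sup>2" by simp
      also have "\<dots> \<le> (\<eta> * \<delta>)\<^sup>2" using \<open>\<bar>- \<eta> * (lv k - m k)\<bar> \<le> \<eta> * \<delta>\<close>
        by (intro power_mono) auto
      finally show ?thesis by (simp add: power_mult_distrib)
    qed
    have "exp (- \<eta> * (lv k - m k)) \<le> 1 - \<eta> * (lv k - m k) + \<eta>\<^sup>2 * \<delta>\<^sup>2"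
      using exp_quad[OF b] c by (simp add: power_mult_distrib)
    thus "v k * exp (- \<eta> * (lv k - m k)) \<le> v k * (1 - \<eta> * (lv k - m k) + \<eta>\<^sup>2 * \<delta>\<^sup>2)"
      using v0 k by (intro mult_left_mono) auto
  qed
  hence "(\<Sum>k<K. v k * exp (- \<eta> * (lv k - m k))) \<le> (\<Sum>k<K. v k * (1 - \<eta> * (lv k - m k) + \<eta>\<^sup>2 * \<delta>\<^sup>2))"
    by (intro sum_mono) auto
  also have "\<dots> = 1 - \<eta> * (\<Sum>k<K. v k * (lv k - m k)) + \<eta>\<^sup>2 * \<delta>\<^sup>2"
  proof -
    have "(\<Sum>k<K. v k * (1 - \<eta> * (lv k - m k) + \<eta>\<^sup>2 * \<delta>\<^sup>2)) = (\<Sum>k<K. v k) - \<eta> * (\<Sum>k<K. v k * (lv k - m k)) + (\<Sum>k<K. v k) * (\<eta>\<^sup>2 * \<delta>\<^sup>2)"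
      by (simp add: ring_distribs sum.distrib sum_subtractf sum_distrib_left sum_distrib_right mult.assoc mult.left_commute)
    thus ?thesis using sv by simp
  qed
  finally have e2: "(\<Sum>k<K. v k * exp (- \<eta> * (lv k - m k))) \<le> 1 + (- \<eta> * (\<Sum>k<K. v k * (lv k - m k)) + \<eta>\<^sup>2 * \<delta>\<^sup>2)" by simp
  have pos2: "(\<Sum>k<K. v k * exp (- \<eta> * (lv k - m k))) > 0" using v0 ne by (intro sum_pos) auto
  have l2: "ln (\<Sum>k<K. v k * exp (- \<eta> * (lv k - m k))) \<le> - \<eta> * (\<Sum>k<K. v k * (lv k - m k)) + \<eta>\<^sup>2 * \<delta>\<^sup>2"
  proof -
    have "ln (\<Sum>k<K. v k * exp (- \<eta> * (lv k - m k))) \<le> (\<Sum>k<K. v k * exp (- \<eta> * (lv k - m k))) - 1"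
      using pos2 by (rule ln_le_minus_one)
    thus ?thesis using e2 by linarith
  qed
  have kl: "ln (Q / S) + \<eta> * (\<Sum>k<K. v k * m k) \<le> 0"
  proof -
    have "\<forall>k<K. v k * (ln (Q / S) + \<eta> * m k) \<le> \<rho> k / S - v k"
    proof (intro allI impI)
      fix k assume k: "k < K"
      have x0: "Q / S * exp (\<eta> * m k) > 0" using Q0 S0 by auto
      have "ln (Q / S * exp (\<eta> * m k)) \<le> Q / S * exp (\<eta> * m k) - 1" using x0 by (rule ln_le_minus_one)
      moreover have "ln (Q / S * exp (\<eta> * m k)) = ln (Q / S) + \<eta> * m k" using Q0 S0 by (subst ln_mult) auto
      ultimately have "v k * (ln (Q / S) + \<eta> * m k) \<le> v k * (Q / S * exp (\<eta> * m k) - 1)"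
        using v0 k by (intro mult_left_mono) auto
      also have "\<dots> = \<rho> k / S - v k" using Q0 S0
        by (simp add: v_def field_simps mult_exp_exp)
      finally show "v k * (ln (Q / S) + \<eta> * m k) \<le> \<rho> k / S - v k" .
    qed
    hence "(\<Sum>k<K. v k * (ln (Q / S) + \<eta> * m k)) \<le> (\<Sum>k<K. \<rho> k / S - v k)" by (intro sum_mono) auto
    also have "\<dots> = 0" using sv S0 by (simp add: sum_subtractf S_def sum_divide_distrib[symmetric])
    finally have "(\<Sum>k<K. v k * (ln (Q / S) + \<eta> * m k)) \<le> 0" .
    moreover have "(\<Sum>k<K. v k * (ln (Q / S) + \<eta> * m k)) = (\<Sum>k<K. v k) * ln (Q / S) + \<eta> * (\<Sum>k<K. v k * m k)"
      by (simp add: ring_distribs sum.distrib sum_distrib_left sum_distrib_right mult.assoc mult.left_commute mult.commute)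
    ultimately show ?thesis using sv by simp
  qed
  have "ln (\<Sum>k<K. \<rho> k * exp (- \<eta> * lv k)) = ln Q + ln (\<Sum>k<K. v k * exp (- \<eta> * (lv k - m k)))"
    using e1 Q0 pos2 by (simp add: ln_mult)
  also have "ln Q = ln S + ln (Q / S)" using Q0 S0 by (simp add: ln_div)
  finally have "ln (\<Sum>k<K. \<rho> k * exp (- \<eta> * lv k)) \<le> ln S - \<eta> * (\<Sum>k<K. v k * m k) - \<eta> * (\<Sum>k<K. v k * (lv k - m k)) + \<eta>\<^sup>2 * \<delta>\<^sup>2"
    using l2 kl by linarith
  also have "\<eta> * (\<Sum>k<K. v k * m k) + \<eta> * (\<Sum>k<K. v k * (lv k - m k)) = \<eta> * (\<Sum>k<K. v k * lv k)"
    by (simp add: algebra_simps sum_subtractf flip: distrib_left)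
  ultimately show ?thesis unfolding S_def v_def Q_def by linarith
qed

lemma ip_comm: "ip d x y = ip d y x"
  by (simp add: ip_def mult.commute)

lemma Phi_upd: "Phi J K \<phi> j (ws(j := w)) = Phi J K \<phi> j ws"
  unfolding Phi_def by (intro ext sum.cong prod.cong refl) auto

lemma lc_expand:
  "ip d (Phi J K \<phi> j ws k) z = (\<Sum>a\<in>PiE ({..<J} - {j}) (\<lambda>_. {..<K}).
       (\<Prod>i\<in>{..<J} - {j}. ws i (a i)) * ip d (\<phi> j (a(j := k))) z)"
proof -
  have "ip d (Phi J K \<phi> j ws k) z = (\<Sum>l<d. \<Sum>a\<in>PiE ({..<J} - {j}) (\<lambda>_. {..<K}).
       (\<Prod>i\<in>{..<J} - {j}. ws i (a i)) * (\<phi> j (a(j := k)) l * z l))"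
    unfolding ip_def Phi_def by (simp add: sum_distrib_right mult.assoc)
  also have "\<dots> = (\<Sum>a\<in>PiE ({..<J} - {j}) (\<lambda>_. {..<K}). \<Sum>l<d.
       (\<Prod>i\<in>{..<J} - {j}. ws i (a i)) * (\<phi> j (a(j := k)) l * z l))"
    by (rule sum.swap)
  also have "\<dots> = (\<Sum>a\<in>PiE ({..<J} - {j}) (\<lambda>_. {..<K}).
       (\<Prod>i\<in>{..<J} - {j}. ws i (a i)) * ip d (\<phi> j (a(j := k))) z)"
    unfolding ip_def by (simp add: sum_distrib_left)
  finally show ?thesis .
qed

lemma cost_expand:
  assumes j: "j < J"
  shows "exp_cost J K d \<phi> j (ws(j := w)) Z = (\<Sum>k<K. w k * ip d (Phi J K \<phi> j ws k) Z)"
proof -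
  define S where "S = {..<J} - {j}"
  have jS: "j \<notin> S" and fS: "finite S" and iS: "insert j S = {..<J}" using j by (auto simp: S_def)
  have ja: "joint_actions J K = (\<lambda>(y, g). g(j := y)) ` ({..<K} \<times> PiE S (\<lambda>_. {..<K}))"
    unfolding joint_actions_def iS[symmetric] by (rule PiE_insert_eq)
  have inj: "inj_on (\<lambda>(y, g). g(j := y)) ({..<K} \<times> PiE S (\<lambda>_. {..<K}))"
    using inj_combinator[OF jS, of "\<lambda>_. {..<K}"] by simp
  have "exp_cost J K d \<phi> j (ws(j := w)) Z =
     (\<Sum>(y, g)\<in>{..<K} \<times> PiE S (\<lambda>_. {..<K}).
        (\<Prod>i<J. (ws(j := w)) i ((g(j := y)) i)) * ip d (\<phi> j (g(j := y))) Z)"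
    unfolding exp_cost_def ja by (subst sum.reindex[OF inj]) (simp add: case_prod_unfold)
  also have "\<dots> = (\<Sum>y<K. \<Sum>g\<in>PiE S (\<lambda>_. {..<K}).
        (\<Prod>i<J. (ws(j := w)) i ((g(j := y)) i)) * ip d (\<phi> j (g(j := y))) Z)"
    by (subst sum.cartesian_product) simp
  also have "\<dots> = (\<Sum>y<K. \<Sum>g\<in>PiE S (\<lambda>_. {..<K}).
        w y * ((\<Prod>i\<in>S. ws i (g i)) * ip d (\<phi> j (g(j := y))) Z))"
  proof (intro sum.cong refl)
    fix y g
    have "(\<Prod>i<J. (ws(j := w)) i ((g(j := y)) i)) = (\<Prod>i\<in>insert j S. (ws(j := w)) i ((g(j := y)) i))"
      using iS by simp
    also have "\<dots> = w y * (\<Prod>i\<in>S. (ws(j := w)) i ((g(j := y)) i))"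
      using jS fS by simp
    also have "(\<Prod>i\<in>S. (ws(j := w)) i ((g(j := y)) i)) = (\<Prod>i\<in>S. ws i (g i))"
      using jS by (intro prod.cong) auto
    finally show "(\<Prod>i<J. (ws(j := w)) i ((g(j := y)) i)) * ip d (\<phi> j (g(j := y))) Z =
        w y * ((\<Prod>i\<in>S. ws i (g i)) * ip d (\<phi> j (g(j := y))) Z)" by simp
  qed
  also have "\<dots> = (\<Sum>k<K. w k * ip d (Phi J K \<phi> j ws k) Z)"
    unfolding lc_expand S_def[symmetric] by (simp add: sum_distrib_left)
  finally show ?thesis .
qed

lemma prod_sum_one:
  assumes "finite S" "\<forall>i\<in>S. ws i \<in> simplex K"
  shows "(\<Sum>a\<in>PiE S (\<lambda>_. {..<K}). \<Prod>i\<in>S. ws i (a i)) = 1"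
proof -
  have "(\<Sum>a\<in>PiE S (\<lambda>_. {..<K}). \<Prod>i\<in>S. ws i (a i)) = (\<Prod>i\<in>S. \<Sum>k<K. ws i k)"
    using assms(1) by (subst prod_sum_PiE) auto
  also have "\<dots> = 1" using assms(2) by (intro prod.neutral) (auto simp: simplex_def)
  finally show ?thesis .
qed

lemma prod_nonneg_PiE:
  assumes "\<forall>i\<in>S. ws i \<in> simplex K" "a \<in> PiE S (\<lambda>_. {..<K})"
  shows "(\<Prod>i\<in>S. ws i (a i)) \<ge> 0"
  using assms by (intro prod_nonneg) (auto simp: simplex_def PiE_iff)

lemma upd_joint:
  assumes "j < J" "k < K" "a \<in> PiE ({..<J} - {j}) (\<lambda>_. {..<K})"
  shows "a(j := k) \<in> joint_actions J K"
  using assms unfolding joint_actions_def PiE_iff by (auto simp: extensional_def)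

lemma lc_bound:
  assumes j: "j < J" and k: "k < K" and z: "z \<in> Ctx"
    and bnd: "\<forall>j<J. \<forall>a\<in>joint_actions J K. \<forall>z\<in>Ctx. \<bar>ip d z (\<phi> j a)\<bar> \<le> 1"
    and ws: "\<forall>i\<in>{..<J} - {j}. ws i \<in> simplex K"
  shows "\<bar>ip d (Phi J K \<phi> j ws k) z\<bar> \<le> 1"
proof -
  let ?A = "PiE ({..<J} - {j}) (\<lambda>_. {..<K})"
  let ?P = "\<lambda>a. \<Prod>i\<in>{..<J} - {j}. ws i (a i)"
  have "\<bar>ip d (Phi J K \<phi> j ws k) z\<bar> \<le> (\<Sum>a\<in>?A. \<bar>?P a * ip d (\<phi> j (a(j := k))) z\<bar>)"
    unfolding lc_expand by (rule sum_abs)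
  also have "\<dots> \<le> (\<Sum>a\<in>?A. ?P a)"
  proof (intro sum_mono)
    fix a assume a: "a \<in> ?A"
    have p: "?P a \<ge> 0" using prod_nonneg_PiE[OF ws a] .
    have "\<bar>ip d (\<phi> j (a(j := k))) z\<bar> \<le> 1"
      using bnd j z upd_joint[OF j k a] by (simp add: ip_comm)
    thus "\<bar>?P a * ip d (\<phi> j (a(j := k))) z\<bar> \<le> ?P a"
      using p by (simp add: abs_mult mult_left_le)
  qed
  also have "\<dots> = 1" by (rule prod_sum_one) (use ws in auto)
  finally show ?thesis .
qed


lemma softmax_ratio:
  fixes \<rho> x y :: "nat \<Rightarrow> real"
  assumes K: "K \<ge> 1" and pos: "\<forall>k<K. \<rho> k > 0" and xy: "\<forall>k<K. \<bar>x k - y k\<bar> \<le> a" and k: "k < K"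
  shows "\<rho> k * exp (- x k) / (\<Sum>k<K. \<rho> k * exp (- x k)) \<le> exp (2 * a) * (\<rho> k * exp (- y k) / (\<Sum>k<K. \<rho> k * exp (- y k)))"
proof -
  have ne: "{..<K} \<noteq> {}" using K by (auto simp: lessThan_empty_iff)
  have X0: "(\<Sum>k<K. \<rho> k * exp (- x k)) > 0" using pos ne by (intro sum_pos) auto
  have Y0: "(\<Sum>k<K. \<rho> k * exp (- y k)) > 0" using pos ne by (intro sum_pos) auto
  have e1: "exp (- x i) \<le> exp a * exp (- y i)" if "i < K" for i
  proof -
    have "\<bar>x i - y i\<bar> \<le> a" using xy that by blast
    hence "- x i \<le> a + - y i" by (simp add: abs_le_iff)
    thus ?thesis by (simp flip: exp_add)
  qed
  have e2: "exp (- y i) \<le> exp a * exp (- x i)" if "i < K" for i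
  proof -
    have "\<bar>x i - y i\<bar> \<le> a" using xy that by blast
    hence "- y i \<le> a + - x i" by (simp add: abs_le_iff)
    thus ?thesis by (simp flip: exp_add)
  qed
  have s: "(\<Sum>k<K. \<rho> k * exp (- y k)) \<le> exp a * (\<Sum>k<K. \<rho> k * exp (- x k))"
  proof -
    have "\<rho> i * exp (- y i) \<le> exp a * (\<rho> i * exp (- x i))" if i: "i < K" for i
    proof -
      have "\<rho> i * exp (- y i) \<le> \<rho> i * (exp a * exp (- x i))"
        using e2[OF i] pos i by (intro mult_left_mono) auto
      thus ?thesis by (simp only: mult.left_commute)
    qed
    hence "(\<Sum>k<K. \<rho> k * exp (- y k)) \<le> (\<Sum>k<K. exp a * (\<rho> k * exp (- x k)))"
      by (intro sum_mono) auto
    thus ?thesis by (simp only: sum_distrib_left)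
  qed
  have n: "\<rho> k * exp (- x k) \<le> exp a * (\<rho> k * exp (- y k))"
  proof -
    have "\<rho> k * exp (- x k) \<le> \<rho> k * (exp a * exp (- y k))"
      using e1[OF k] pos k by (intro mult_left_mono) auto
    thus ?thesis by (simp only: mult.left_commute)
  qed
  have h1: "\<rho> k * exp (- x k) / (\<Sum>k<K. \<rho> k * exp (- x k)) \<le> exp a * (\<rho> k * exp (- y k)) * (1 / (\<Sum>k<K. \<rho> k * exp (- x k)))"
    using divide_right_mono[OF n, of "\<Sum>k<K. \<rho> k * exp (- x k)"] X0 by simp
  have h2: "1 / (\<Sum>k<K. \<rho> k * exp (- x k)) \<le> exp a / (\<Sum>k<K. \<rho> k * exp (- y k))"
    using s X0 Y0 by (simp add: le_divide_eq divide_le_eq)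
  have h3: "exp a * (\<rho> k * exp (- y k)) * (1 / (\<Sum>k<K. \<rho> k * exp (- x k))) \<le> exp a * (\<rho> k * exp (- y k)) * (exp a / (\<Sum>k<K. \<rho> k * exp (- y k)))"
    using h2 pos k by (intro mult_left_mono) auto
  have h4: "exp a * (\<rho> k * exp (- y k)) * (exp a / (\<Sum>k<K. \<rho> k * exp (- y k))) = (exp a * exp a) * (\<rho> k * exp (- y k) / (\<Sum>k<K. \<rho> k * exp (- y k)))"
    by simp
  have h5: "exp a * exp a = exp (2 * a)" by (metis exp_add mult_2)
  have "\<rho> k * exp (- x k) / (\<Sum>k<K. \<rho> k * exp (- x k)) \<le> exp a * (\<rho> k * exp (- y k)) * (exp a / (\<Sum>k<K. \<rho> k * exp (- y k)))"
    using h1 h3 by (rule order_trans)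
  also note h4
  also note h5
  finally show ?thesis .
qed

lemma aux_le: "(x::real) \<le> (e - 1) * (1 + 1) \<Longrightarrow> e \<le> f \<Longrightarrow> x \<le> 2 * (f - 1)"
proof -
  assume a: "x \<le> (e - 1) * (1 + 1)" and b: "e \<le> f"
  have "(e - 1) * (1 + 1) = 2 * e - 2" by (simp add: algebra_simps)
  with a b show ?thesis by simp
qed

lemma lc_diff:
  assumes j: "j < J" and k: "k < K" and z: "z \<in> Ctx"
    and bnd: "\<forall>j<J. \<forall>a\<in>joint_actions J K. \<forall>z\<in>Ctx. \<bar>ip d z (\<phi> j a)\<bar> \<le> 1"
    and ws: "\<forall>i\<in>{..<J} - {j}. ws i \<in> simplex K"
    and ws': "\<forall>i\<in>{..<J} - {j}. ws' i \<in> simplex K"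
    and r1: "\<forall>i\<in>{..<J} - {j}. \<forall>k<K. ws i k \<le> exp b * ws' i k"
    and r2: "\<forall>i\<in>{..<J} - {j}. \<forall>k<K. ws' i k \<le> exp b * ws i k"
    and b: "b \<ge> 0"
  shows "\<bar>ip d (Phi J K \<phi> j ws k) z - ip d (Phi J K \<phi> j ws' k) z\<bar> \<le> 2 * (exp (b * real J) - 1)"
proof -
  define S where "S = {..<J} - {j}"
  let ?A = "PiE S (\<lambda>_. {..<K})"
  define P where "P a = (\<Prod>i\<in>S. ws i (a i))" for a
  define P' where "P' a = (\<Prod>i\<in>S. ws' i (a i))" for a
  define E where "E = exp b ^ card S"
  have fS: "finite S" by (simp add: S_def)
  have E1: "E \<ge> 1" using b by (simp add: E_def one_le_power)
  have EJ: "E \<le> exp (b * real J)"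
  proof -
    have "E = exp (real (card S) * b)" by (simp add: E_def exp_of_nat_mult)
    also have "\<dots> \<le> exp (real J * b)"
    proof -
      have "card S \<le> card {..<J}" by (rule card_mono) (auto simp: S_def)
      hence "real (card S) \<le> real J" by simp
      hence "real (card S) * b \<le> real J * b" using b by (rule mult_right_mono)
      thus ?thesis by simp
    qed
    also have "exp (real J * b) = exp (b * real J)" by (simp only: mult.commute)
    finally show ?thesis .
  qed
  have PP: "\<bar>P a - P' a\<bar> \<le> (E - 1) * (P a + P' a)" if a: "a \<in> ?A" for a
  proof -
    have p0: "P a \<ge> 0" unfolding P_def using prod_nonneg_PiE[of S ws K a] ws a by (simp add: S_def)
    have p0': "P' a \<ge> 0" unfolding P'_def using prod_nonneg_PiE[of S ws' K a] ws' a by (simp add: S_def)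
    have "P a \<le> (\<Prod>i\<in>S. exp b * ws' i (a i))" unfolding P_def
      using a ws r1 by (intro prod_mono) (auto simp: S_def simplex_def PiE_iff)
    hence l1: "P a \<le> E * P' a" by (simp add: prod.distrib E_def P'_def)
    have "P' a \<le> (\<Prod>i\<in>S. exp b * ws i (a i))" unfolding P'_def
      using a ws' r2 by (intro prod_mono) (auto simp: S_def simplex_def PiE_iff)
    hence l2: "P' a \<le> E * P a" by (simp add: prod.distrib E_def P_def)
    have q1: "(E - 1) * P a \<ge> 0" using E1 p0 by simp
    have q2: "(E - 1) * P' a \<ge> 0" using E1 p0' by simp
    have q3: "(E - 1) * (P a + P' a) = (E - 1) * P a + (E - 1) * P' a" by (simp add: distrib_left)
    have q4: "(E - 1) * P a = E * P a - P a" "(E - 1) * P' a = E * P' a - P' a" by (simp_all add: left_diff_distrib)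
    show ?thesis using l1 l2 q1 q2 q3 q4 by linarith
  qed
  have eq: "ip d (Phi J K \<phi> j ws k) z - ip d (Phi J K \<phi> j ws' k) z =
      (\<Sum>a\<in>?A. (P a - P' a) * ip d (\<phi> j (a(j := k))) z)"
    unfolding lc_expand S_def[symmetric] P_def P'_def sum_subtractf[symmetric] left_diff_distrib by (rule refl)
  have "\<bar>ip d (Phi J K \<phi> j ws k) z - ip d (Phi J K \<phi> j ws' k) z\<bar> \<le> (\<Sum>a\<in>?A. \<bar>(P a - P' a) * ip d (\<phi> j (a(j := k))) z\<bar>)"
    unfolding eq by (rule sum_abs)
  also have "\<dots> \<le> (\<Sum>a\<in>?A. (E - 1) * (P a + P' a))"
  proof (rule sum_mono)
    fix a assume a: "a \<in> ?A"
    have jo: "a(j := k) \<in> joint_actions J K" using upd_joint[OF j k, of a] a by (simp add: S_def)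
    have "\<bar>ip d z (\<phi> j (a(j := k)))\<bar> \<le> 1"
      using bnd j z jo by blast
    hence "\<bar>ip d (\<phi> j (a(j := k))) z\<bar> \<le> 1" by (simp only: ip_comm)
    hence "\<bar>(P a - P' a) * ip d (\<phi> j (a(j := k))) z\<bar> \<le> \<bar>P a - P' a\<bar>"
      by (simp add: abs_mult mult_left_le)
    thus "\<bar>(P a - P' a) * ip d (\<phi> j (a(j := k))) z\<bar> \<le> (E - 1) * (P a + P' a)" using PP[OF a] by linarith
  qed
  also have "\<dots> = (E - 1) * ((\<Sum>a\<in>?A. P a) + (\<Sum>a\<in>?A. P' a))"
    by (simp add: sum_distrib_left[symmetric] sum.distrib)
  also have "(\<Sum>a\<in>?A. P a) = 1" unfolding P_def by (rule prod_sum_one) (use ws fS in \<open>auto simp: S_def\<close>)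
  also have "(\<Sum>a\<in>?A. P' a) = 1" unfolding P'_def by (rule prod_sum_one) (use ws' fS in \<open>auto simp: S_def\<close>)
  finally have "\<bar>ip d (Phi J K \<phi> j ws k) z - ip d (Phi J K \<phi> j ws' k) z\<bar> \<le> (E - 1) * (1 + 1)" .
  thus ?thesis using EJ by (rule aux_le)
qed



lemma play_simplex:
  assumes K: "K \<ge> 1" and pos: "\<forall>k<K. \<rho> zh k > 0"
  shows "pomwu_play K d \<eta> \<rho> \<Psi> zh \<in> simplex K"
proof -
  have ne: "{..<K} \<noteq> {}" using K by (auto simp: lessThan_empty_iff)
  have S0: "(\<Sum>k<K. \<rho> zh k * exp (- \<eta> * ip d (\<Psi> zh k) zh)) > 0" using pos ne by (intro sum_pos) auto
  have "(\<Sum>k<K. pomwu_play K d \<eta> \<rho> \<Psi> zh k) =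
      (\<Sum>k<K. \<rho> zh k * exp (- \<eta> * ip d (\<Psi> zh k) zh) / (\<Sum>k<K. \<rho> zh k * exp (- \<eta> * ip d (\<Psi> zh k) zh)))"
    by (intro sum.cong) (auto simp: pomwu_play_def)
  also have "\<dots> = 1" using S0 by (simp add: sum_divide_distrib[symmetric])
  finally show ?thesis using pos S0 by (auto simp: simplex_def pomwu_play_def intro!: divide_nonneg_pos)
qed

lemma simplex_abs:
  assumes "w \<in> simplex K" "\<forall>k<K. \<bar>c k\<bar> \<le> 1"
  shows "\<bar>\<Sum>k<K. w k * c k\<bar> \<le> 1"
proof -
  have "\<bar>\<Sum>k<K. w k * c k\<bar> \<le> (\<Sum>k<K. \<bar>w k * c k\<bar>)" by (rule sum_abs)
  also have "\<dots> \<le> (\<Sum>k<K. w k)"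
  proof (rule sum_mono)
    fix k assume "k \<in> {..<K}"
    hence "0 \<le> w k" "\<bar>c k\<bar> \<le> 1" using assms by (auto simp: simplex_def)
    thus "\<bar>w k * c k\<bar> \<le> w k" by (simp add: abs_mult mult_left_le)
  qed
  also have "\<dots> = 1" using assms by (simp add: simplex_def)
  finally show ?thesis .
qed

lemma count_bad:
  fixes Zs Zhat :: "nat \<Rightarrow> 'a"
  assumes ctx: "\<forall>t<T. Zs t \<in> Ctx" and fin: "finite Ctx"
  shows "card {t. t < T \<and> \<not> (Zhat t = Zs t \<and> (\<exists>p<t. Zs p = Zs t \<and> Zhat p = Zs p \<and> (\<forall>s. p < s \<and> s < t \<longrightarrow> Zs s \<noteq> Zs t)))}
     \<le> card Ctx + 2 * card {t. t < T \<and> Zhat t \<noteq> Zs t}"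
proof -
  define M where "M = {t. t < T \<and> Zhat t \<noteq> Zs t}"
  define F where "F = {t. t < T \<and> (\<forall>p<t. Zs p \<noteq> Zs t)}"
  define N where "N = {t. t < T \<and> (\<exists>p<t. Zs p = Zs t \<and> Zhat p \<noteq> Zs p \<and> (\<forall>s. p < s \<and> s < t \<longrightarrow> Zs s \<noteq> Zs t))}"
  define B where "B = {t. t < T \<and> \<not> (Zhat t = Zs t \<and> (\<exists>p<t. Zs p = Zs t \<and> Zhat p = Zs p \<and> (\<forall>s. p < s \<and> s < t \<longrightarrow> Zs s \<noteq> Zs t)))}"
  have fM: "finite M" "finite F" "finite N" by (auto simp: M_def F_def N_def)
  have sub: "B \<subseteq> M \<union> F \<union> N"
  proof
    fix t assume tB: "t \<in> B"
    show "t \<in> M \<union> F \<union> N"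
    proof (rule ccontr)
      assume nt: "t \<notin> M \<union> F \<union> N"
      have tT: "t < T" using tB by (simp add: B_def)
      have h1: "Zhat t = Zs t" using nt tT by (auto simp: M_def)
      have "\<exists>p<t. Zs p = Zs t" using nt tT by (auto simp: F_def)
      define Q where "Q = {p. p < t \<and> Zs p = Zs t}"
      have fQ: "finite Q" and neQ: "Q \<noteq> {}" using \<open>\<exists>p<t. Zs p = Zs t\<close> by (auto simp: Q_def)
      define q where "q = Max Q"
      have qQ: "q \<in> Q" using Max_in[OF fQ neQ] by (simp add: q_def)
      have qmax: "\<forall>s. q < s \<and> s < t \<longrightarrow> Zs s \<noteq> Zs t"
      proof (intro allI impI)
        fix s assume s: "q < s \<and> s < t"
        show "Zs s \<noteq> Zs t"
        proof
          assume "Zs s = Zs t"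
          hence "s \<in> Q" using s by (simp add: Q_def)
          hence "s \<le> q" unfolding q_def using Max_ge[OF fQ] by simp
          thus False using s by simp
        qed
      qed
      show False
      proof (cases "Zhat q = Zs q")
        case True
        have "Zhat t = Zs t \<and> (\<exists>p<t. Zs p = Zs t \<and> Zhat p = Zs p \<and> (\<forall>s. p < s \<and> s < t \<longrightarrow> Zs s \<noteq> Zs t))"
          using h1 qQ qmax True unfolding Q_def by blast
        thus False using tB unfolding B_def by blast
      next
        case False
        hence "t \<in> N" using tT qQ qmax by (auto simp: N_def Q_def)
        thus False using nt by auto
      qed
    qed
  qed
  have cF: "card F \<le> card Ctx"
  proof (rule card_inj_on_le[OF _ _ fin])
    show "inj_on Zs F"
    proof (rule inj_onI)
      fix a b assume ab: "a \<in> F" "b \<in> F" "Zs a = Zs b"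
      show "a = b"
      proof (rule ccontr)
        assume "a \<noteq> b"
        hence "a < b \<or> b < a" by auto
        thus False using ab by (auto simp: F_def)
      qed
    qed
    show "Zs ` F \<subseteq> Ctx" using ctx by (auto simp: F_def)
  qed
  define g where "g p = (LEAST s. p < s \<and> Zs s = Zs p)" for p
  have NM: "N \<subseteq> g ` M"
  proof
    fix t assume "t \<in> N"
    then obtain p where tT: "t < T" and p: "p < t" "Zs p = Zs t" "Zhat p \<noteq> Zs p"
      and btw: "\<forall>s. p < s \<and> s < t \<longrightarrow> Zs s \<noteq> Zs t" by (auto simp: N_def)
    have "g p = t" unfolding g_def
    proof (rule Least_equality)
      show "p < t \<and> Zs t = Zs p" using p by simp
      show "t \<le> y" if "p < y \<and> Zs y = Zs p" for y
        using that btw p by (metis not_le)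
    qed
    moreover have "p \<in> M" using p tT by (auto simp: M_def)
    ultimately show "t \<in> g ` M" by blast
  qed
  have cN: "card N \<le> card M"
    using card_mono[OF finite_imageI[OF fM(1)] NM] card_image_le[OF fM(1), of g] by linarith
  have "card B \<le> card (M \<union> F \<union> N)" using sub fM by (intro card_mono) auto
  also have "\<dots> \<le> card M + card F + card N" using card_Un_le[of "M \<union> F" N] card_Un_le[of M F] by linarith
  finally show ?thesis using cF cN by (simp add: B_def M_def)
qed

locale gm =
  fixes J K d :: nat and \<phi> :: "nat \<Rightarrow> (nat \<Rightarrow> nat) \<Rightarrow> nat \<Rightarrow> real" and \<eta> :: real
    and Zh :: "nat \<Rightarrow> nat \<Rightarrow> nat \<Rightarrow> real" and Zs :: "nat \<Rightarrow> nat \<Rightarrow> real"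
    and Ctx :: "(nat \<Rightarrow> real) set"
  assumes K1: "K \<ge> 1" and eta0: "\<eta> \<ge> 0" and finC: "finite Ctx"
    and bnd: "\<forall>j<J. \<forall>a\<in>joint_actions J K. \<forall>z\<in>Ctx. \<bar>ip d z (\<phi> j a)\<bar> \<le> 1"
begin

definition "st t = game_state J K d \<phi> \<eta> Zh Zs t"
definition "rh t = fst (st t)"
definition "ps t = snd (st t)"
definition "W t = game_play J K d \<phi> \<eta> Zh Zs t"
definition "lo j t k = ip d (Phi J K \<phi> j (W t) k) (Zs t)"
definition "mh j t k = ip d (ps t j (Zs t) k) (Zs t)"
definition "dl j t = Max ((\<lambda>k. \<bar>lo j t k - mh j t k\<bar>) ` {..<K})"
definition "V j t = pomwu_play K d \<eta> (rh t j) (ps t j) (Zs t)"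

lemma W_eq: "W t = (\<lambda>j. pomwu_play K d \<eta> (rh t j) (ps t j) (Zh j t))"
  unfolding W_def game_play_def rh_def ps_def st_def by (simp add: case_prod_beta)

lemma rh_Suc: "rh (Suc t) = (\<lambda>j z l. if z = Zs t then rh t j z l * exp (- \<eta> * ip d (Phi J K \<phi> j (W t) l) z) else rh t j z l)"
  unfolding W_eq rh_def ps_def st_def by (simp add: case_prod_beta Let_def)

lemma ps_Suc: "ps (Suc t) = (\<lambda>j z. if z = Zs t then Phi J K \<phi> j (W t) else ps t j z)"
  unfolding W_eq rh_def ps_def st_def by (simp add: case_prod_beta Let_def)

lemma rh_0: "rh 0 = (\<lambda>j z l. 1 / real K)" by (simp add: rh_def st_def)
lemma ps_0: "ps 0 = (\<lambda>j z k l. 0)" by (simp add: ps_def st_def)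

lemma rh_pos: "rh t j z l > 0"
proof (induction t)
  case 0 thus ?case using K1 by (simp add: rh_0)
next
  case (Suc t) thus ?case by (auto simp: rh_Suc)
qed

lemma W_simplex: "W t i \<in> simplex K"
  unfolding W_eq using rh_pos K1 by (intro play_simplex) auto

lemma V_simplex: "V j t \<in> simplex K"
  unfolding V_def using rh_pos K1 by (intro play_simplex) auto

lemma ps_bnd: "j < J \<Longrightarrow> z \<in> Ctx \<Longrightarrow> k < K \<Longrightarrow> \<bar>ip d (ps t j z k) z\<bar> \<le> 1"
proof (induction t)
  case 0 thus ?case by (simp add: ps_0 ip_def)
next
  case (Suc t)
  show ?case
  proof (cases "z = Zs t")
    case True
    thus ?thesis using Suc.prems lc_bound[OF Suc.prems(1) Suc.prems(3) Suc.prems(2) bnd] W_simplex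
      by (simp add: ps_Suc)
  next
    case False thus ?thesis using Suc by (simp add: ps_Suc)
  qed
qed

lemma lo_bnd: "j < J \<Longrightarrow> k < K \<Longrightarrow> Zs t \<in> Ctx \<Longrightarrow> \<bar>lo j t k\<bar> \<le> 1"
  unfolding lo_def using lc_bound[OF _ _ _ bnd] W_simplex by blast

lemma mh_bnd: "j < J \<Longrightarrow> k < K \<Longrightarrow> Zs t \<in> Ctx \<Longrightarrow> \<bar>mh j t k\<bar> \<le> 1"
  unfolding mh_def using ps_bnd by blast

lemma dl_ge: "k < K \<Longrightarrow> \<bar>lo j t k - mh j t k\<bar> \<le> dl j t"
  unfolding dl_def by (rule Max_ge) auto

lemma dl_le2: "j < J \<Longrightarrow> Zs t \<in> Ctx \<Longrightarrow> dl j t \<le> 2"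
proof -
  assume a: "j < J" "Zs t \<in> Ctx"
  have ne: "{..<K} \<noteq> {}" using K1 by (auto simp: lessThan_empty_iff)
  have "\<forall>k<K. \<bar>lo j t k - mh j t k\<bar> \<le> 2"
  proof (intro allI impI)
    fix k assume k: "k < K"
    have "\<bar>lo j t k\<bar> \<le> 1" "\<bar>mh j t k\<bar> \<le> 1" using lo_bnd mh_bnd a k by auto
    thus "\<bar>lo j t k - mh j t k\<bar> \<le> 2" by linarith
  qed
  thus ?thesis unfolding dl_def using ne by (subst Max_le_iff) auto
qed

lemma dl_nonneg: "0 \<le> dl j t"
  using dl_ge[of 0 j t] K1 by linarith

lemma rh_closed: "rh t j z l = (1 / real K) * exp (- \<eta> * (\<Sum>s<t. if Zs s = z then ip d (Phi J K \<phi> j (W s) l) z else 0))"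
proof (induction t)
  case 0 thus ?case by (simp add: rh_0)
next
  case (Suc t)
  show ?case
  proof (cases "z = Zs t")
    case True
    have "rh (Suc t) j z l = rh t j z l * exp (- \<eta> * ip d (Phi J K \<phi> j (W t) l) z)"
      using True by (simp add: rh_Suc)
    also have "\<dots> = (1 / real K) * (exp (- \<eta> * (\<Sum>s<t. if Zs s = z then ip d (Phi J K \<phi> j (W s) l) z else 0))
          * exp (- \<eta> * ip d (Phi J K \<phi> j (W t) l) z))"
      using Suc.IH by simp
    also have "exp (- \<eta> * (\<Sum>s<t. if Zs s = z then ip d (Phi J K \<phi> j (W s) l) z else 0))
          * exp (- \<eta> * ip d (Phi J K \<phi> j (W t) l) z) =
        exp (- \<eta> * (\<Sum>s<t. if Zs s = z then ip d (Phi J K \<phi> j (W s) l) z else 0) + - \<eta> * ip d (Phi J K \<phi> j (W t) l) z)"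
      by (simp only: exp_add)
    also have "- \<eta> * (\<Sum>s<t. if Zs s = z then ip d (Phi J K \<phi> j (W s) l) z else 0) + - \<eta> * ip d (Phi J K \<phi> j (W t) l) z
       = - \<eta> * (\<Sum>s<Suc t. if Zs s = z then ip d (Phi J K \<phi> j (W s) l) z else 0)"
      using True by (simp add: distrib_left)
    finally show ?thesis .
  next
    case False
    thus ?thesis using Suc.IH by (simp add: rh_Suc)
  qed
qed

lemma psi_step:
  assumes j: "j < J" and z: "Zs t \<in> Ctx" and eta: "\<eta> \<le> 1/2"
  shows "ln (\<Sum>k<K. rh (Suc t) j (Zs t) k) \<le> ln (\<Sum>k<K. rh t j (Zs t) k) - \<eta> * (\<Sum>k<K. V j t k * lo j t k) + \<eta>\<^sup>2 * (dl j t)\<^sup>2"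
proof -
  have e: "(\<Sum>k<K. rh (Suc t) j (Zs t) k) = (\<Sum>k<K. rh t j (Zs t) k * exp (- \<eta> * lo j t k))"
    by (simp add: rh_Suc lo_def)
  have v: "(\<Sum>k<K. V j t k * lo j t k) = (\<Sum>k<K. (rh t j (Zs t) k * exp (- \<eta> * mh j t k) /
      (\<Sum>k<K. rh t j (Zs t) k * exp (- \<eta> * mh j t k))) * lo j t k)"
    by (intro sum.cong) (auto simp: V_def pomwu_play_def mh_def)
  have ed: "\<eta> * dl j t \<le> 1"
  proof -
    have "\<eta> * dl j t \<le> \<eta> * 2" using dl_le2[OF j z] eta0 by (rule mult_left_mono)
    thus ?thesis using eta by linarith
  qed
  have "ln (\<Sum>k<K. rh t j (Zs t) k * exp (- \<eta> * lo j t k)) \<le> ln (\<Sum>k<K. rh t j (Zs t) k)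
     - \<eta> * (\<Sum>k<K. (rh t j (Zs t) k * exp (- \<eta> * mh j t k) / (\<Sum>k<K. rh t j (Zs t) k * exp (- \<eta> * mh j t k))) * lo j t k)
     + \<eta>\<^sup>2 * (dl j t)\<^sup>2"
    by (rule opt_step[OF K1]) (use rh_pos dl_ge eta0 ed in auto)
  thus ?thesis unfolding e v .
qed

lemma psi_sum:
  assumes j: "j < J" and z: "\<forall>t<T. Zs t \<in> Ctx" and eta: "\<eta> \<le> 1/2"
  shows "ln (\<Sum>k<K. rh T j z k) \<le> (\<Sum>t<T. if Zs t = z then - \<eta> * (\<Sum>k<K. V j t k * lo j t k) + \<eta>\<^sup>2 * (dl j t)\<^sup>2 else 0)"
  using z
proof (induction T)
  case 0
  have "(\<Sum>k<K. rh 0 j z k) = 1" using K1 by (simp add: rh_0)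
  thus ?case by simp
next
  case (Suc T)
  have IH: "ln (\<Sum>k<K. rh T j z k) \<le> (\<Sum>t<T. if Zs t = z then - \<eta> * (\<Sum>k<K. V j t k * lo j t k) + \<eta>\<^sup>2 * (dl j t)\<^sup>2 else 0)"
    using Suc by auto
  show ?case
  proof (cases "Zs T = z")
    case True
    have "ln (\<Sum>k<K. rh (Suc T) j z k) \<le> ln (\<Sum>k<K. rh T j z k) - \<eta> * (\<Sum>k<K. V j T k * lo j T k) + \<eta>\<^sup>2 * (dl j T)\<^sup>2"
      using psi_step[OF j _ eta, of T] Suc.prems True by auto
    thus ?thesis using IH True by simp
  next
    case False
    have "rh (Suc T) j z = rh T j z" using False by (auto simp: rh_Suc)
    thus ?thesis using IH False by simp
  qed
qed

lemma psi_lower: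
  assumes pi: "\<pi> \<in> simplex K"
  shows "(\<Sum>k<K. \<pi> k * (ln (1 / real K) - \<eta> * (\<Sum>t<T. if Zs t = z then lo j t k else 0))) \<le> ln (\<Sum>k<K. rh T j z k)"
proof -
  have ne: "{..<K} \<noteq> {}" using K1 by (auto simp: lessThan_empty_iff)
  have spos: "(\<Sum>k<K. rh T j z k) > 0" using rh_pos ne by (intro sum_pos) auto
  have each: "ln (1 / real K) - \<eta> * (\<Sum>t<T. if Zs t = z then lo j t k else 0) \<le> ln (\<Sum>k<K. rh T j z k)"
    if k: "k < K" for k
  proof -
    have "(\<Sum>t<T. if Zs t = z then ip d (Phi J K \<phi> j (W t) k) z else 0) = (\<Sum>t<T. if Zs t = z then lo j t k else 0)"
      by (intro sum.cong) (auto simp: lo_def)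
    hence c: "rh T j z k = (1 / real K) * exp (- \<eta> * (\<Sum>t<T. if Zs t = z then lo j t k else 0))"
      by (simp add: rh_closed)
    have "ln (rh T j z k) = ln (1 / real K) + (- \<eta> * (\<Sum>t<T. if Zs t = z then lo j t k else 0))"
      unfolding c using K1 by (subst ln_mult) auto
    moreover have "ln (rh T j z k) \<le> ln (\<Sum>k<K. rh T j z k)"
    proof (rule ln_mono)
      show "rh T j z k \<le> (\<Sum>k<K. rh T j z k)" using k by (intro member_le_sum less_imp_le rh_pos) auto
    qed (rule rh_pos)
    ultimately show ?thesis by simp
  qed
  have "(\<Sum>k<K. \<pi> k * (ln (1 / real K) - \<eta> * (\<Sum>t<T. if Zs t = z then lo j t k else 0))) \<le> (\<Sum>k<K. \<pi> k * ln (\<Sum>k<K. rh T j z k))"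
    by (rule sum_mono) (use pi each in \<open>auto simp: simplex_def intro: mult_left_mono\<close>)
  also have "\<dots> = (\<Sum>k<K. \<pi> k) * ln (\<Sum>k<K. rh T j z k)" by (simp add: sum_distrib_right)
  also have "\<dots> = ln (\<Sum>k<K. rh T j z k)" using pi by (simp add: simplex_def)
  finally show ?thesis .
qed

lemma regret_ctx:
  assumes j: "j < J" and z: "\<forall>t<T. Zs t \<in> Ctx" and eta: "0 < \<eta>" "\<eta> \<le> 1/2" and pi: "\<pi> \<in> simplex K"
  shows "(\<Sum>t<T. if Zs t = c then (\<Sum>k<K. V j t k * lo j t k) - (\<Sum>k<K. \<pi> k * lo j t k) else 0)
    \<le> ln (real K) / \<eta> + \<eta> * (\<Sum>t<T. if Zs t = c then (dl j t)\<^sup>2 else 0)"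
proof -
  define A where "A = (\<Sum>t<T. if Zs t = c then (\<Sum>k<K. V j t k * lo j t k) else 0)"
  define B where "B = (\<Sum>t<T. if Zs t = c then (\<Sum>k<K. \<pi> k * lo j t k) else 0)"
  define D where "D = (\<Sum>t<T. if Zs t = c then (dl j t)\<^sup>2 else 0)"
  have "(\<Sum>t<T. if Zs t = c then - \<eta> * (\<Sum>k<K. V j t k * lo j t k) + \<eta>\<^sup>2 * (dl j t)\<^sup>2 else 0) =
      (\<Sum>t<T. - \<eta> * (if Zs t = c then (\<Sum>k<K. V j t k * lo j t k) else 0) + \<eta>\<^sup>2 * (if Zs t = c then (dl j t)\<^sup>2 else 0))"
    by (intro sum.cong) auto
  also have "\<dots> = - \<eta> * A + \<eta>\<^sup>2 * D"
    unfolding A_def D_def by (simp only: sum.distrib sum_distrib_left)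
  finally have up: "ln (\<Sum>k<K. rh T j c k) \<le> - \<eta> * A + \<eta>\<^sup>2 * D"
    using psi_sum[OF j z eta(2), of c] by simp
  have "(\<Sum>k<K. \<pi> k * (ln (1 / real K) - \<eta> * (\<Sum>t<T. if Zs t = c then lo j t k else 0))) =
      (\<Sum>k<K. \<pi> k) * ln (1 / real K) - \<eta> * (\<Sum>k<K. \<pi> k * (\<Sum>t<T. if Zs t = c then lo j t k else 0))"
    by (simp add: right_diff_distrib sum_subtractf sum_distrib_left sum_distrib_right mult.left_commute)
  also have "(\<Sum>k<K. \<pi> k * (\<Sum>t<T. if Zs t = c then lo j t k else 0)) = B"
  proof -
    have "(\<Sum>k<K. \<pi> k * (\<Sum>t<T. if Zs t = c then lo j t k else 0)) = (\<Sum>k<K. \<Sum>t<T. \<pi> k * (if Zs t = c then lo j t k else 0))"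
      by (simp add: sum_distrib_left)
    also have "\<dots> = (\<Sum>t<T. \<Sum>k<K. \<pi> k * (if Zs t = c then lo j t k else 0))" by (rule sum.swap)
    also have "\<dots> = B" unfolding B_def by (intro sum.cong) auto
    finally show ?thesis .
  qed
  also have "(\<Sum>k<K. \<pi> k) = 1" using pi by (simp add: simplex_def)
  finally have low: "ln (1 / real K) - \<eta> * B \<le> ln (\<Sum>k<K. rh T j c k)"
    using psi_lower[OF pi, where T=T and z=c and j=j] by simp
  have lnK: "ln (1 / real K) = - ln (real K)" using K1 by (simp add: ln_div)
  have "\<eta> * (A - B) \<le> ln (real K) + \<eta>\<^sup>2 * D" using up low lnK by (simp add: right_diff_distrib)
  hence "A - B \<le> (ln (real K) + \<eta>\<^sup>2 * D) / \<eta>" using eta by (simp add: le_divide_eq mult.commute)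
  also have "\<dots> = ln (real K) / \<eta> + \<eta> * D" using eta by (simp add: add_divide_distrib power2_eq_square)
  finally have AB: "A - B \<le> ln (real K) / \<eta> + \<eta> * D" .
  have "(\<Sum>t<T. if Zs t = c then (\<Sum>k<K. V j t k * lo j t k) - (\<Sum>k<K. \<pi> k * lo j t k) else 0) = A - B"
    unfolding A_def B_def by (simp add: sum_subtractf[symmetric] if_distrib cong: if_cong) 
  thus ?thesis using AB D_def by simp
qed

lemma unchanged: "Zs s \<noteq> z \<Longrightarrow> rh (Suc s) i z = rh s i z \<and> ps (Suc s) i z = ps s i z"
  by (auto simp: rh_Suc ps_Suc)

lemma interval:
  assumes "p < t" "\<forall>s. p < s \<and> s < t \<longrightarrow> Zs s \<noteq> z"
  shows "rh t i z = rh (Suc p) i z \<and> ps t i z = ps (Suc p) i z"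
  using assms
proof (induction t)
  case 0 thus ?case by simp
next
  case (Suc t)
  show ?case
  proof (cases "p < t")
    case True
    have "rh t i z = rh (Suc p) i z \<and> ps t i z = ps (Suc p) i z" using Suc True by auto
    moreover have "Zs t \<noteq> z" using Suc.prems True by auto
    ultimately show ?thesis using unchanged[of t z i] by simp
  next
    case False
    hence "t = p" using Suc.prems by auto
    thus ?thesis by simp
  qed
qed

lemma W_form:
  assumes "Zh i s = z" "k < K"
  shows "W s i k = rh s i z k * exp (- \<eta> * ip d (ps s i z k) z) / (\<Sum>k<K. rh s i z k * exp (- \<eta> * ip d (ps s i z k) z))"
  using assms by (simp add: W_eq pomwu_play_def)

lemma stab:
  assumes j: "j < J" and pt: "p < t" and zs: "Zs p = Zs t" and btw: "\<forall>s. p < s \<and> s < t \<longrightarrow> Zs s \<noteq> Zs t"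
    and ctx: "Zs t \<in> Ctx" and hz: "\<forall>i<J. Zh i t = Zs t \<and> Zh i p = Zs p"
  shows "(dl j t)\<^sup>2 \<le> 576 * \<eta>\<^sup>2 * (real J)\<^sup>2"
proof -
  define z where "z = Zs t"
  have zp: "Zs p = z" using zs z_def by simp
  have intv: "rh t i z = rh (Suc p) i z \<and> ps t i z = ps (Suc p) i z" for i
    using interval[OF pt, of z i] btw z_def by auto
  have lo_p: "lo i p k = ip d (Phi J K \<phi> i (W p) k) z" for i k by (simp add: lo_def zp)
  have rhS: "rh (Suc p) i z k = rh p i z k * exp (- \<eta> * lo i p k)" for i k
    using zp by (simp add: rh_Suc lo_p)
  have psS: "ps (Suc p) i z = Phi J K \<phi> i (W p)" for i using zp by (simp add: ps_Suc)
  have mh_t: "mh i t k = lo i p k" for i k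
    using intv[of i] by (simp add: mh_def psS lo_p flip: z_def)
  have num_t: "rh t i z k * exp (- \<eta> * ip d (ps t i z k) z) = rh p i z k * exp (- (2 * \<eta> * lo i p k))" for i k
  proof -
    have "rh t i z k * exp (- \<eta> * ip d (ps t i z k) z) = rh p i z k * (exp (- \<eta> * lo i p k) * exp (- \<eta> * lo i p k))"
      using intv[of i] by (simp add: rhS psS lo_p)
    also have "exp (- \<eta> * lo i p k) * exp (- \<eta> * lo i p k) = exp (- (2 * \<eta> * lo i p k))"
      by (simp only: exp_add[symmetric]) (simp add: algebra_simps)
    finally show ?thesis .
  qed
  have Wt: "W t i k = rh p i z k * exp (- (2 * \<eta> * lo i p k)) / (\<Sum>k<K. rh p i z k * exp (- (2 * \<eta> * lo i p k)))"
    if i: "i < J" and k: "k < K" for i k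
    using W_form[of i t z k] hz i k num_t by (simp add: z_def)
  have Wp: "W p i k = rh p i z k * exp (- (\<eta> * mh i p k)) / (\<Sum>k<K. rh p i z k * exp (- (\<eta> * mh i p k)))"
    if i: "i < J" and k: "k < K" for i k
    using W_form[of i p z k] hz i k zp by (simp add: mh_def)
  have xy: "\<bar>2 * \<eta> * lo i p k - \<eta> * mh i p k\<bar> \<le> 3 * \<eta>" if i: "i < J" and k: "k < K" for i k
  proof -
    have a: "\<bar>lo i p k\<bar> \<le> 1" "\<bar>mh i p k\<bar> \<le> 1" using lo_bnd mh_bnd i k ctx zp z_def by auto
    have "\<bar>2 * \<eta> * lo i p k\<bar> \<le> 2 * \<eta>" using a eta0 by (simp add: abs_mult mult_left_le)
    moreover have "\<bar>\<eta> * mh i p k\<bar> \<le> \<eta>" using a eta0 by (simp add: abs_mult mult_left_le)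
    ultimately show ?thesis by linarith
  qed
  have e6: "exp (2 * (3 * \<eta>)) = exp (6 * \<eta>)" by simp
  have r1: "W t i k \<le> exp (6 * \<eta>) * W p i k" if i: "i < J" and k: "k < K" for i k
    unfolding Wt[OF i k] Wp[OF i k] e6[symmetric]
    by (rule softmax_ratio[OF K1]) (use rh_pos xy i k in auto)
  have r2: "W p i k \<le> exp (6 * \<eta>) * W t i k" if i: "i < J" and k: "k < K" for i k
    unfolding Wt[OF i k] Wp[OF i k] e6[symmetric]
    by (rule softmax_ratio[OF K1]) (use rh_pos xy i k in \<open>auto simp: abs_minus_commute\<close>)
  have dk: "\<bar>lo j t k - mh j t k\<bar> \<le> 2 * (exp (6 * \<eta> * real J) - 1)" if k: "k < K" for k
  proof -
    have "\<bar>ip d (Phi J K \<phi> j (W t) k) z - ip d (Phi J K \<phi> j (W p) k) z\<bar> \<le> 2 * (exp (6 * \<eta> * real J) - 1)"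
      by (rule lc_diff[OF j k _ bnd]) (use ctx W_simplex r1 r2 eta0 in \<open>auto simp: z_def\<close>)
    thus ?thesis by (simp add: mh_t lo_p lo_def z_def zs)
  qed
  define x where "x = 6 * \<eta> * real J"
  have x0: "x \<ge> 0" using eta0 by (simp add: x_def)
  have dlx: "dl j t \<le> 2 * (exp x - 1)"
    unfolding dl_def x_def using K1 dk by (subst Max_le_iff) (auto simp: lessThan_empty_iff)
  have "(dl j t)\<^sup>2 \<le> 16 * x\<^sup>2"
  proof (cases "x \<le> 1")
    case True
    have "exp x \<le> 1 + x + x\<^sup>2" using exp_quad[of x] True x0 by simp
    moreover have "x\<^sup>2 \<le> x" using True x0 by (simp add: power2_eq_square mult_le_cancel_right1 mult_left_le)
    moreover have "2 * (exp x - 1) = 2 * exp x - 2" by simp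
    ultimately have "dl j t \<le> 4 * x" using dlx by linarith
    hence "(dl j t)\<^sup>2 \<le> (4 * x)\<^sup>2" using dl_nonneg by (intro power_mono) auto
    thus ?thesis by (simp add: power_mult_distrib)
  next
    case False
    have "dl j t \<le> 2" using dl_le2[OF j ctx] .
    hence "(dl j t)\<^sup>2 \<le> 2\<^sup>2" using dl_nonneg by (intro power_mono) auto
    moreover have "1 \<le> x\<^sup>2" using False by (simp add: one_le_power)
    ultimately show ?thesis by simp
  qed
  thus ?thesis by (simp add: x_def power_mult_distrib)
qed

lemma cost_actual: "j < J \<Longrightarrow> exp_cost J K d \<phi> j (W t) (Zs t) = (\<Sum>k<K. W t j k * lo j t k)"
  using cost_expand[of j J K d \<phi> "W t" "W t j" "Zs t"] by (simp add: lo_def)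

lemma cost_pi: "j < J \<Longrightarrow> exp_cost J K d \<phi> j ((W t)(j := w)) (Zs t) = (\<Sum>k<K. w k * lo j t k)"
  using cost_expand[of j J K d \<phi> "W t" w "Zs t"] by (simp add: lo_def)

lemma regret_all:
  assumes j: "j < J" and z: "\<forall>t<T. Zs t \<in> Ctx" and eta: "0 < \<eta>" "\<eta> \<le> 1/2"
    and pi: "\<forall>c\<in>Ctx. \<pi> c \<in> simplex K"
  shows "(\<Sum>t<T. (\<Sum>k<K. V j t k * lo j t k) - (\<Sum>k<K. \<pi> (Zs t) k * lo j t k))
    \<le> real (card Ctx) * (ln (real K) / \<eta>) + \<eta> * (\<Sum>t<T. (dl j t)\<^sup>2)"
proof -
  define g where "g t = (\<Sum>k<K. V j t k * lo j t k) - (\<Sum>k<K. \<pi> (Zs t) k * lo j t k)" for t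
  have each: "(\<Sum>t<T. if Zs t = c then g t else 0) \<le> ln (real K) / \<eta> + \<eta> * (\<Sum>t<T. if Zs t = c then (dl j t)\<^sup>2 else 0)"
    if c: "c \<in> Ctx" for c
  proof -
    have "(\<Sum>t<T. if Zs t = c then g t else 0) = (\<Sum>t<T. if Zs t = c then (\<Sum>k<K. V j t k * lo j t k) - (\<Sum>k<K. \<pi> c k * lo j t k) else 0)"
      by (intro sum.cong) (auto simp: g_def)
    also have "\<dots> \<le> ln (real K) / \<eta> + \<eta> * (\<Sum>t<T. if Zs t = c then (dl j t)\<^sup>2 else 0)"
      using regret_ctx[OF j z eta, of "\<pi> c" c] pi c by auto
    finally show ?thesis .
  qed
  have "(\<Sum>c\<in>Ctx. \<Sum>t<T. if Zs t = c then g t else 0) \<le> (\<Sum>c\<in>Ctx. ln (real K) / \<eta> + \<eta> * (\<Sum>t<T. if Zs t = c then (dl j t)\<^sup>2 else 0))"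
    using each by (intro sum_mono) auto
  moreover have "(\<Sum>c\<in>Ctx. \<Sum>t<T. if Zs t = c then g t else 0) = (\<Sum>t<T. g t)"
  proof -
    have "(\<Sum>c\<in>Ctx. \<Sum>t<T. if Zs t = c then g t else 0) = (\<Sum>t<T. \<Sum>c\<in>Ctx. if Zs t = c then g t else 0)"
      by (rule sum.swap)
    also have "\<dots> = (\<Sum>t<T. g t)" using z by (intro sum.cong) (auto simp: sum.delta'[OF finC])
    finally show ?thesis .
  qed
  moreover have "(\<Sum>c\<in>Ctx. ln (real K) / \<eta> + \<eta> * (\<Sum>t<T. if Zs t = c then (dl j t)\<^sup>2 else 0))
      = real (card Ctx) * (ln (real K) / \<eta>) + \<eta> * (\<Sum>t<T. (dl j t)\<^sup>2)"
  proof -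
    have "(\<Sum>c\<in>Ctx. \<Sum>t<T. if Zs t = c then (dl j t)\<^sup>2 else 0) = (\<Sum>t<T. \<Sum>c\<in>Ctx. if Zs t = c then (dl j t)\<^sup>2 else 0)"
      by (rule sum.swap)
    also have "\<dots> = (\<Sum>t<T. (dl j t)\<^sup>2)" using z by (intro sum.cong) (auto simp: sum.delta'[OF finC])
    finally have "(\<Sum>c\<in>Ctx. \<Sum>t<T. if Zs t = c then (dl j t)\<^sup>2 else 0) = (\<Sum>t<T. (dl j t)\<^sup>2)" .
    thus ?thesis by (simp add: sum.distrib sum_distrib_left[symmetric])
  qed
  ultimately show ?thesis unfolding g_def by simp
qed

lemma agent_bound:
  fixes Zhat :: "nat \<Rightarrow> nat \<Rightarrow> real"
  assumes j: "j < J" and z: "\<forall>t<T. Zs t \<in> Ctx \<and> (\<forall>i<J. Zh i t = Zhat t)" and eta: "0 < \<eta>" "\<eta> \<le> 1/2"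
    and pi: "\<forall>c\<in>Ctx. \<pi> c \<in> simplex K"
  shows "(\<Sum>t<T. exp_cost J K d \<phi> j (W t) (Zs t)) - (\<Sum>t<T. exp_cost J K d \<phi> j ((W t)(j := \<pi> (Zs t))) (Zs t))
    \<le> real (card Ctx) * (ln (real K) / \<eta>)
      + \<eta> * (576 * \<eta>\<^sup>2 * (real J)\<^sup>2 * real T + 4 * (real (card Ctx) + 2 * real (card {t. t < T \<and> Zhat t \<noteq> Zs t})))
      + 2 * real (card {t. t < T \<and> Zhat t \<noteq> Zs t})"
proof -
  define L where "L = card {t. t < T \<and> Zhat t \<noteq> Zs t}"
  define good where "good t = (Zhat t = Zs t \<and> (\<exists>p<t. Zs p = Zs t \<and> Zhat p = Zs p \<and> (\<forall>s. p < s \<and> s < t \<longrightarrow> Zs s \<noteq> Zs t)))" for t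
  define Bd where "Bd = {t. t < T \<and> \<not> good t}"
  have zc: "\<forall>t<T. Zs t \<in> Ctx" using z by auto
  have cB: "card Bd \<le> card Ctx + 2 * L"
    unfolding Bd_def L_def good_def by (rule count_bad[OF zc finC])
  have step1: "(\<Sum>k<K. W t j k * lo j t k) \<le> (\<Sum>k<K. V j t k * lo j t k) + (if Zhat t \<noteq> Zs t then 2 else 0)"
    if t: "t < T" for t
  proof (cases "Zhat t = Zs t")
    case True
    hence "W t j = V j t" using z t j by (simp add: W_eq V_def)
    thus ?thesis using True by simp
  next
    case False
    have lb: "\<forall>k<K. \<bar>lo j t k\<bar> \<le> 1" using lo_bnd j z t by auto
    have "\<bar>\<Sum>k<K. W t j k * lo j t k\<bar> \<le> 1" using simplex_abs[OF W_simplex lb] .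
    moreover have "\<bar>\<Sum>k<K. V j t k * lo j t k\<bar> \<le> 1" using simplex_abs[OF V_simplex lb] .
    moreover have "(if Zhat t \<noteq> Zs t then 2 else 0) = (2::real)" using False by simp
    ultimately show ?thesis by linarith
  qed
  have dlb: "(dl j t)\<^sup>2 \<le> 576 * \<eta>\<^sup>2 * (real J)\<^sup>2 + (if good t then 0 else 4)" if t: "t < T" for t
  proof (cases "good t")
    case True
    then obtain p where p: "p < t" "Zs p = Zs t" "Zhat p = Zs p" "\<forall>s. p < s \<and> s < t \<longrightarrow> Zs s \<noteq> Zs t"
      and h: "Zhat t = Zs t" by (auto simp: good_def)
    have "(dl j t)\<^sup>2 \<le> 576 * \<eta>\<^sup>2 * (real J)\<^sup>2"
      by (rule stab[OF j p(1) p(2) p(4)]) (use z t p h in auto)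
    thus ?thesis using True by simp
  next
    case False
    have "dl j t \<le> 2" using dl_le2 j z t by auto
    hence "(dl j t)\<^sup>2 \<le> 2\<^sup>2" using dl_nonneg by (intro power_mono) auto
    hence "(dl j t)\<^sup>2 \<le> 4" by simp
    moreover have "0 \<le> 576 * \<eta>\<^sup>2 * (real J)\<^sup>2" by simp
    moreover have "(if good t then 0 else 4) = (4::real)" using False by simp
    ultimately show ?thesis by linarith
  qed
  have sum_if: "(\<Sum>t<T. if P t then (c::real) else 0) = c * real (card {t. t < T \<and> P t})" for P c
  proof -
    have "(\<Sum>t<T. if P t then c else 0) = (\<Sum>t\<in>{t\<in>{..<T}. P t}. c)" by (rule sum.inter_filter[symmetric]) simp
    also have "{t\<in>{..<T}. P t} = {t. t < T \<and> P t}" by auto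
    finally show ?thesis by simp
  qed
  have D: "(\<Sum>t<T. (dl j t)\<^sup>2) \<le> 576 * \<eta>\<^sup>2 * (real J)\<^sup>2 * real T + 4 * (real (card Ctx) + 2 * real L)"
  proof -
    have "(\<Sum>t<T. (dl j t)\<^sup>2) \<le> (\<Sum>t<T. 576 * \<eta>\<^sup>2 * (real J)\<^sup>2 + (if \<not> good t then 4 else 0))"
    proof (rule sum_mono)
      fix t assume "t \<in> {..<T}"
      thus "(dl j t)\<^sup>2 \<le> 576 * \<eta>\<^sup>2 * (real J)\<^sup>2 + (if \<not> good t then 4 else 0)" using dlb[of t] by (auto split: if_splits)
    qed
    also have "\<dots> = 576 * \<eta>\<^sup>2 * (real J)\<^sup>2 * real T + 4 * real (card Bd)"
      by (simp add: sum.distrib sum_if Bd_def)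
    also have "real (card Bd) \<le> real (card Ctx) + 2 * real L" using cB by linarith
    finally show ?thesis by simp
  qed
  have C1: "(\<Sum>t<T. exp_cost J K d \<phi> j (W t) (Zs t)) \<le> (\<Sum>t<T. (\<Sum>k<K. V j t k * lo j t k)) + 2 * real L"
  proof -
    have "(\<Sum>t<T. exp_cost J K d \<phi> j (W t) (Zs t)) = (\<Sum>t<T. (\<Sum>k<K. W t j k * lo j t k))"
      using cost_actual[OF j] by simp
    also have "\<dots> \<le> (\<Sum>t<T. (\<Sum>k<K. V j t k * lo j t k) + (if Zhat t \<noteq> Zs t then 2 else 0))"
      using step1 by (intro sum_mono) auto
    also have "\<dots> = (\<Sum>t<T. (\<Sum>k<K. V j t k * lo j t k)) + 2 * real L"
      by (simp add: sum.distrib sum_if L_def)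
    finally show ?thesis .
  qed
  have C2: "(\<Sum>t<T. exp_cost J K d \<phi> j ((W t)(j := \<pi> (Zs t))) (Zs t)) = (\<Sum>t<T. (\<Sum>k<K. \<pi> (Zs t) k * lo j t k))"
    using cost_pi[OF j] by simp
  have R: "(\<Sum>t<T. (\<Sum>k<K. V j t k * lo j t k)) - (\<Sum>t<T. (\<Sum>k<K. \<pi> (Zs t) k * lo j t k))
      \<le> real (card Ctx) * (ln (real K) / \<eta>) + \<eta> * (\<Sum>t<T. (dl j t)\<^sup>2)"
    using regret_all[OF j zc eta pi] by (simp add: sum_subtractf)
  have "\<eta> * (\<Sum>t<T. (dl j t)\<^sup>2) \<le> \<eta> * (576 * \<eta>\<^sup>2 * (real J)\<^sup>2 * real T + 4 * (real (card Ctx) + 2 * real L))"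
    using D eta by (intro mult_left_mono) auto
  thus ?thesis using C1 C2 R by (simp add: L_def)
qed

lemma trivial_bound:
  assumes j: "j < J" and z: "\<forall>t<T. Zs t \<in> Ctx" and pi: "\<forall>c\<in>Ctx. \<pi> c \<in> simplex K"
  shows "(\<Sum>t<T. exp_cost J K d \<phi> j (W t) (Zs t)) - (\<Sum>t<T. exp_cost J K d \<phi> j ((W t)(j := \<pi> (Zs t))) (Zs t)) \<le> 2 * real T"
proof -
  have "(\<Sum>t<T. exp_cost J K d \<phi> j (W t) (Zs t)) - (\<Sum>t<T. exp_cost J K d \<phi> j ((W t)(j := \<pi> (Zs t))) (Zs t))
      = (\<Sum>t<T. exp_cost J K d \<phi> j (W t) (Zs t) - exp_cost J K d \<phi> j ((W t)(j := \<pi> (Zs t))) (Zs t))"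
    by (simp add: sum_subtractf)
  also have "\<dots> \<le> (\<Sum>t<T. 2)"
  proof (rule sum_mono)
    fix t assume "t \<in> {..<T}"
    hence t: "t < T" by simp
    have lb: "\<forall>k<K. \<bar>lo j t k\<bar> \<le> 1" using lo_bnd j z t by auto
    have "\<bar>\<Sum>k<K. W t j k * lo j t k\<bar> \<le> 1" using simplex_abs[OF W_simplex lb] .
    moreover have "\<bar>\<Sum>k<K. \<pi> (Zs t) k * lo j t k\<bar> \<le> 1" using simplex_abs[OF _ lb] pi z t by auto
    ultimately show "exp_cost J K d \<phi> j (W t) (Zs t) - exp_cost J K d \<phi> j ((W t)(j := \<pi> (Zs t))) (Zs t) \<le> 2"
      using cost_actual[OF j, of t] cost_pi[OF j, of t "\<pi> (Zs t)"] by linarith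
  qed
  also have "\<dots> = 2 * real T" by simp
  finally show ?thesis .
qed

lemma K1_bound:
  assumes j: "j < J" and z: "\<forall>t<T. Zs t \<in> Ctx" and pi: "\<forall>c\<in>Ctx. \<pi> c \<in> simplex K" and K: "K = 1"
  shows "(\<Sum>t<T. exp_cost J K d \<phi> j (W t) (Zs t)) - (\<Sum>t<T. exp_cost J K d \<phi> j ((W t)(j := \<pi> (Zs t))) (Zs t)) \<le> 0"
proof -
  have "exp_cost J K d \<phi> j (W t) (Zs t) = exp_cost J K d \<phi> j ((W t)(j := \<pi> (Zs t))) (Zs t)" if t: "t < T" for t
  proof -
    have "W t j 0 = 1" using W_simplex[of t j] K by (simp add: simplex_def)
    moreover have "\<pi> (Zs t) 0 = 1" using pi z t K by (auto simp: simplex_def)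
    ultimately show ?thesis using cost_actual[OF j, of t] cost_pi[OF j, of t] K by simp
  qed
  hence "(\<Sum>t<T. exp_cost J K d \<phi> j (W t) (Zs t)) = (\<Sum>t<T. exp_cost J K d \<phi> j ((W t)(j := \<pi> (Zs t))) (Zs t))"
    by (intro sum.cong) auto
  thus ?thesis by simp
qed

end



lemma regret_le:
  assumes K: "K \<ge> 1"
    and H: "\<forall>\<pi>. (\<forall>z\<in>Ctx. \<pi> z \<in> simplex K) \<longrightarrow>
      (\<Sum>t<T. exp_cost J K d \<phi> j (ws t) (Zs t)) - (\<Sum>t<T. exp_cost J K d \<phi> j ((ws t)(j := \<pi> (Zs t))) (Zs t)) \<le> B"
  shows "ctx_regret J K d \<phi> Ctx Zs T ws j \<le> B"
proof -
  define S where "S = {(\<Sum>t<T. exp_cost J K d \<phi> j ((ws t)(j := \<pi> (Zs t))) (Zs t)) | \<pi>. \<forall>z\<in>Ctx. \<pi> z \<in> simplex K}"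
  define \<pi>0 :: "(nat \<Rightarrow> real) \<Rightarrow> nat \<Rightarrow> real" where "\<pi>0 = (\<lambda>z k. if k = 0 then 1 else 0)"
  have p0: "\<forall>z\<in>Ctx. \<pi>0 z \<in> simplex K"
  proof
    fix z
    have "(\<Sum>k<K. \<pi>0 z k) = 1" using K by (simp add: \<pi>0_def)
    thus "\<pi>0 z \<in> simplex K" by (simp add: simplex_def \<pi>0_def)
  qed
  have ne: "S \<noteq> {}" using p0 unfolding S_def by blast
  have "(\<Sum>t<T. exp_cost J K d \<phi> j (ws t) (Zs t)) - B \<le> Inf S"
  proof (rule cInf_greatest[OF ne])
    fix x assume "x \<in> S"
    then obtain \<pi> where "\<forall>z\<in>Ctx. \<pi> z \<in> simplex K" "x = (\<Sum>t<T. exp_cost J K d \<phi> j ((ws t)(j := \<pi> (Zs t))) (Zs t))"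
      unfolding S_def by blast
    thus "(\<Sum>t<T. exp_cost J K d \<phi> j (ws t) (Zs t)) - B \<le> x" using H by force
  qed
  thus ?thesis unfolding ctx_regret_def S_def by linarith
qed

lemma arith_core:
  fixes a b s lnK L m T J \<eta> :: real
  assumes a: "0 < a" "a \<le> b" and s: "1 \<le> s" and lnK: "1/2 \<le> lnK" and L: "0 \<le> L" and m: "0 \<le> m"
    and X: "lnK * (L + m) = a ^ 4" and T: "T = b ^ 4" and J: "J = s ^ 2" and eta: "\<eta> = a / (2 * s * b)"
  shows "m * (lnK / \<eta>) + \<eta> * (576 * \<eta>\<^sup>2 * J\<^sup>2 * T + 4 * (m + 2 * L)) + 2 * L \<le> 86 * (a ^ 3 * b * s)"
proof -
  have b0: "0 < b" using a by linarith
  have s0: "0 < s" using s by linarith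
  have e0: "0 < \<eta>" using a b0 s0 eta by simp
  have mlnK: "m * lnK \<le> a ^ 4"
  proof -
    have "0 \<le> lnK * L" using lnK L by simp
    thus ?thesis using X by (simp add: algebra_simps)
  qed
  have Lm: "L + m \<le> 2 * a ^ 4"
  proof -
    have "(1/2) * (L + m) \<le> lnK * (L + m)" using lnK L m by (intro mult_right_mono) auto
    thus ?thesis using X by simp
  qed
  have t1: "m * (lnK / \<eta>) \<le> 2 * (a ^ 3 * b * s)"
  proof -
    have "m * (lnK / \<eta>) = (m * lnK) * (2 * s * b / a)" unfolding eta using a b0 s0 by (simp add: field_simps)
    also have "\<dots> \<le> a ^ 4 * (2 * s * b / a)" using mlnK a b0 s0 by (intro mult_right_mono) auto
    also have "\<dots> = 2 * (a ^ 3 * b * s)" using a by (simp add: field_simps power_def)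
    finally show ?thesis .
  qed
  have t2: "\<eta> * (576 * \<eta>\<^sup>2 * J\<^sup>2 * T) = 72 * (a ^ 3 * b * s)"
    using a b0 s0 unfolding eta J T by (simp add: field_simps power2_eq_square power3_eq_cube power4_eq_xxxx)
  have t3: "\<eta> * (4 * (m + 2 * L)) \<le> 8 * (a ^ 3 * b * s)"
  proof -
    have "m + 2 * L \<le> 2 * (L + m)" using m by simp
    hence "4 * (m + 2 * L) \<le> 16 * a ^ 4" using Lm by simp
    hence "\<eta> * (4 * (m + 2 * L)) \<le> \<eta> * (16 * a ^ 4)" using e0 by (intro mult_left_mono) auto
    also have "\<eta> * (16 * a ^ 4) = 8 * (a ^ 5 / (s * b))" unfolding eta using b0 s0 by (simp add: field_simps eval_nat_numeral)
    also have "a ^ 5 / (s * b) \<le> a ^ 3 * b * s"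
    proof -
      have "a * a \<le> b * b" using a by (intro mult_mono) auto
      also have "b * b \<le> (b * s) * (b * s)"
      proof -
        have "b \<le> b * s" using b0 s by simp
        thus ?thesis using b0 by (intro mult_mono) auto
      qed
      finally have "a ^ 3 * (a * a) \<le> a ^ 3 * ((b * s) * (b * s))" using a by (intro mult_left_mono) auto
      hence "a ^ 5 \<le> (a ^ 3 * b * s) * (s * b)" by (simp add: algebra_simps power_def eval_nat_numeral)
      thus ?thesis using b0 s0 by (simp add: divide_le_eq)
    qed
    finally show ?thesis by simp
  qed
  have t4: "2 * L \<le> 4 * (a ^ 3 * b * s)"
  proof -
    have "a ^ 4 = a ^ 3 * a" by (simp add: power_def eval_nat_numeral)
    also have "\<dots> \<le> a ^ 3 * (b * s)"
    proof -
      have "b \<le> b * s" using b0 s by simp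
      hence "a \<le> b * s" using a by linarith
      thus ?thesis using a by (intro mult_left_mono) auto
    qed
    finally have "a ^ 4 \<le> a ^ 3 * b * s" by (simp add: mult.assoc)
    thus ?thesis using Lm m by linarith
  qed
  have "\<eta> * (576 * \<eta>\<^sup>2 * J\<^sup>2 * T + 4 * (m + 2 * L)) = \<eta> * (576 * \<eta>\<^sup>2 * J\<^sup>2 * T) + \<eta> * (4 * (m + 2 * L))"
    by (simp add: distrib_left)
  thus ?thesis using t1 t2 t3 t4 by linarith
qed

theorem proposition9:
  shows "\<exists>c>0. \<exists>C. \<forall>(J::nat) (K::nat) (d::nat) (\<phi> :: nat \<Rightarrow> (nat \<Rightarrow> nat) \<Rightarrow> nat \<Rightarrow> real)
      (Ctx :: (nat \<Rightarrow> real) set) (Zs :: nat \<Rightarrow> nat \<Rightarrow> real) (Zh :: nat \<Rightarrow> nat \<Rightarrow> nat \<Rightarrow> real)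
      (Zhat :: nat \<Rightarrow> nat \<Rightarrow> real) (T::nat).
     J \<ge> 2 \<longrightarrow> K \<ge> 1 \<longrightarrow> finite Ctx \<longrightarrow>
     (\<forall>z\<in>Ctx. \<forall>l\<ge>d. z l = 0) \<longrightarrow>
     (\<forall>j<J. \<forall>a\<in>joint_actions J K. \<forall>z\<in>Ctx. \<bar>ip d z (\<phi> j a)\<bar> \<le> 1) \<longrightarrow>
     (\<forall>t<T. Zs t \<in> Ctx \<and> Zhat t \<in> Ctx \<and> (\<forall>j<J. Zh j t = Zhat t)) \<longrightarrow>
     (let L = real (card {t. t < T \<and> Zhat t \<noteq> Zs t});
          m = real (card Ctx);
          \<eta> = c * real J powr (-1/2) * real T powr (-1/4) * (ln (real K) * (L + m)) powr (1/4)
      in \<forall>j<J. ctx_regret J K d \<phi> Ctx Zs T (game_play J K d \<phi> \<eta> Zh Zs) j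
               \<le> C * ((ln (real K) * (L + m)) powr (3/4) * real T powr (1/4) * real J powr (1/2)))"
proof (rule exI[of _ "1/2"], rule conjI, simp, rule exI[of _ 100], intro allI impI)
  fix J K d :: nat and \<phi> :: "nat \<Rightarrow> (nat \<Rightarrow> nat) \<Rightarrow> nat \<Rightarrow> real" and Ctx :: "(nat \<Rightarrow> real) set"
    and Zs :: "nat \<Rightarrow> nat \<Rightarrow> real" and Zh :: "nat \<Rightarrow> nat \<Rightarrow> nat \<Rightarrow> real" and Zhat :: "nat \<Rightarrow> nat \<Rightarrow> real" and T :: nat
  assume J2: "J \<ge> 2" and K1: "K \<ge> 1" and fin: "finite Ctx" and zero: "\<forall>z\<in>Ctx. \<forall>l\<ge>d. z l = 0"
    and bnd: "\<forall>j<J. \<forall>a\<in>joint_actions J K. \<forall>z\<in>Ctx. \<bar>ip d z (\<phi> j a)\<bar> \<le> 1"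
    and hz: "\<forall>t<T. Zs t \<in> Ctx \<and> Zhat t \<in> Ctx \<and> (\<forall>j<J. Zh j t = Zhat t)"
  define L where "L = real (card {t. t < T \<and> Zhat t \<noteq> Zs t})"
  define m where "m = real (card Ctx)"
  define X where "X = ln (real K) * (L + m)"
  define \<eta> where "\<eta> = 1/2 * real J powr (-1/2) * real T powr (-1/4) * X powr (1/4)"
  define R where "R = X powr (3/4) * real T powr (1/4) * real J powr (1/2)"
  have L0: "0 \<le> L" and m0: "0 \<le> m" by (simp_all add: L_def m_def)
  have lnK0: "0 \<le> ln (real K)" using K1 by simp
  have X0: "0 \<le> X" using L0 m0 lnK0 by (simp add: X_def)
  have R0: "0 \<le> R" by (simp add: R_def)
  have eta0: "0 \<le> \<eta>" by (simp add: \<eta>_def)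
  interpret G: gm J K d \<phi> \<eta> Zh Zs Ctx
    by unfold_locales (use K1 eta0 fin bnd in auto)
  have Weq: "game_play J K d \<phi> \<eta> Zh Zs = G.W" by (rule ext) (simp add: G.W_def)
  have zc: "\<forall>t<T. Zs t \<in> Ctx" using hz by auto
  have zh: "\<forall>t<T. Zs t \<in> Ctx \<and> (\<forall>i<J. Zh i t = Zhat t)" using hz by auto
  have G: "ctx_regret J K d \<phi> Ctx Zs T (game_play J K d \<phi> \<eta> Zh Zs) j \<le> 100 * R" if j: "j < J" for j
    unfolding Weq
  proof (rule regret_le[OF K1], intro allI impI)
    fix \<pi> :: "(nat \<Rightarrow> real) \<Rightarrow> nat \<Rightarrow> real" assume pi: "\<forall>z\<in>Ctx. \<pi> z \<in> simplex K"
    show "(\<Sum>t<T. exp_cost J K d \<phi> j (G.W t) (Zs t)) - (\<Sum>t<T. exp_cost J K d \<phi> j ((G.W t)(j := \<pi> (Zs t))) (Zs t)) \<le> 100 * R"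
    proof (cases "K = 1")
      case True
      show ?thesis using G.K1_bound[OF j zc pi True] R0 by linarith
    next
      case False
      hence K2: "K \<ge> 2" using K1 by simp
      have lnK: "1/2 \<le> ln (real K)"
      proof -
        have "exp (1/2) \<le> (2::real)" by (rule exp_half_le2)
        hence "ln (exp (1/2)) \<le> ln (2::real)" by (subst ln_le_cancel_iff) auto
        moreover have "ln (2::real) \<le> ln (real K)" using K2 by (subst ln_le_cancel_iff) auto
        ultimately show ?thesis by simp
      qed
      have s1: "1 \<le> real J powr (1/2)" using J2 by (intro ge_one_powr_ge_zero) auto
      show ?thesis
      proof (cases "real T \<le> X")
        case True
        have "2 * real T \<le> 2 * R"
        proof (cases "T = 0")
          case True thus ?thesis using R0 by simp
        next
          case False
          have "real T = real T powr (3/4 + 1/4)" using False by simp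
          also have "\<dots> = real T powr (3/4) * real T powr (1/4)" by (rule powr_add)
          also have "\<dots> \<le> X powr (3/4) * real T powr (1/4)"
            using True by (intro mult_right_mono powr_mono2) auto
          also have "\<dots> \<le> X powr (3/4) * real T powr (1/4) * real J powr (1/2)"
            using mult_left_mono[OF s1, of "X powr (3/4) * real T powr (1/4)"] by simp
          finally show ?thesis by (simp add: R_def)
        qed
        thus ?thesis using G.trivial_bound[OF j zc pi] R0 by linarith
      next
        case False
        hence XT: "X < real T" by simp
        have T0: "0 < T" using XT X0 by simp
        have "Zs 0 \<in> Ctx" using zc T0 by simp
        hence "Ctx \<noteq> {}" by auto
        hence "m \<ge> 1" using fin by (simp add: m_def Suc_le_eq card_gt_0_iff)
        moreover have "0 < ln (real K)" using K2 by simp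
        ultimately have Xp: "0 < X" using L0 by (simp add: X_def)
        define a where "a = X powr (1/4)"
        define b where "b = real T powr (1/4)"
        define s where "s = real J powr (1/2)"
        have a0: "0 < a" using Xp by (simp add: a_def)
        have ab: "a \<le> b" unfolding a_def b_def using XT X0 by (intro powr_mono2) auto
        have b0: "0 < b" using T0 by (simp add: b_def)
        have a4: "a ^ 4 = X" unfolding a_def using Xp by (simp add: powr_power)
        have b4: "b ^ 4 = real T" unfolding b_def using T0 by (simp add: powr_power)
        have s2: "s ^ 2 = real J" unfolding s_def using J2 by (simp add: powr_power)
        have a3: "a ^ 3 = X powr (3/4)" unfolding a_def using Xp by (simp add: powr_power)
        have Rab: "R = a ^ 3 * b * s" by (simp add: R_def a3 b_def s_def)
        have m12: "(-1/2::real) = - (1/2)" "(-1/4::real) = - (1/4)" by simp_all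
        have eta: "\<eta> = a / (2 * s * b)"
          unfolding \<eta>_def m12 powr_minus a_def[symmetric] b_def[symmetric] s_def[symmetric]
          by (simp add: field_simps)
        have sp: "0 < s" using s1 unfolding s_def[symmetric] by linarith
        have eta_pos: "0 < \<eta>" unfolding eta using a0 b0 sp by (intro divide_pos_pos mult_pos_pos) auto
        have eta_half: "\<eta> \<le> 1/2"
        proof -
          have s1': "1 \<le> s" using s1 unfolding s_def .
          have "b \<le> s * b" using mult_right_mono[OF s1', of b] b0 by simp
          hence "a \<le> s * b" using ab by linarith
          hence "a / (2 * s * b) \<le> (s * b) / (2 * s * b)" using sp b0 by (intro divide_right_mono) auto
          also have "(s * b) / (2 * s * b) = 1/2" using sp b0 by simp
          finally show ?thesis unfolding eta .
        qed
        have "(\<Sum>t<T. exp_cost J K d \<phi> j (G.W t) (Zs t)) - (\<Sum>t<T. exp_cost J K d \<phi> j ((G.W t)(j := \<pi> (Zs t))) (Zs t))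
          \<le> m * (ln (real K) / \<eta>) + \<eta> * (576 * \<eta>\<^sup>2 * (real J)\<^sup>2 * real T + 4 * (m + 2 * L)) + 2 * L"
          using G.agent_bound[OF j zh eta_pos eta_half pi] by (simp add: L_def m_def)
        also have "\<dots> \<le> 86 * (a ^ 3 * b * s)"
          by (rule arith_core[OF a0 ab _ lnK L0 m0]) (use s1 a4 b4 s2 eta in \<open>auto simp: X_def s_def\<close>)
        also have "\<dots> \<le> 100 * R"
        proof -
          have "0 \<le> a ^ 3 * b * s" using a0 b0 sp by simp
          thus ?thesis unfolding Rab by linarith
        qed
        finally show ?thesis .
      qed
    qed
  qed
  show "let L = real (card {t. t < T \<and> Zhat t \<noteq> Zs t}); m = real (card Ctx);
          \<eta> = 1 / 2 * real J powr (- 1 / 2) * real T powr (- 1 / 4) * (ln (real K) * (L + m)) powr (1 / 4)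
      in \<forall>j<J. ctx_regret J K d \<phi> Ctx Zs T (game_play J K d \<phi> \<eta> Zh Zs) j
           \<le> 100 * ((ln (real K) * (L + m)) powr (3 / 4) * real T powr (1 / 4) * real J powr (1 / 2))"
    unfolding Let_def using G unfolding R_def X_def \<eta>_def L_def m_def by blast
qed

end
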